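(* Let $I\subset S$ be a squarefree monomial ideal generated by monomials of degree at least $2$, and let $k\ge 0$. Then $I$ is $k$-clean if and only if its Alexander dual $I^\vee$ is a $k$-decomposable monomial ideal.
   Context: $S=K[x_1,\dots,x_n]$, $K$ a field. Every such $I$ equals $I_\Delta$ (Stanley–Reisner ideal, generated by $\prod_{i\in F}x_i$ for non-faces $F$) for a simplicial complex $\Delta$ on $[n]$; its Alexander dual is $I^\vee=I_{\Delta^\vee}$ where $\Delta^\vee=\{F\subseteq[n]:[n]\setminus F\notin\Delta\}$. For a monomial $u=x_1^{a_1}\cdots x_n^{a_n}$, $\mathrm{supp}(u)=\{i:a_i>0\}$; $G(I)$ is the minimal monomial generating set. For an ideal $I$, $\min(I)$ is the set of minimal primes of $I$. A monomial $u\neq 1$ with $u\notin I$ is a cleaner monomial of $I$ if $\min(I+Su)\subseteq\min(I)$. For $k\ge 0$, the class of $k$-clean monomial ideals is defined recursively (smallest class closed under the rule): a proper monomial ideal $I$ is $k$-clean if either $I$ is prime, or $I$ has no embedded primes and there is a cleaner monomial $u$ of $I$ with $|\mathrm{supp}(u)|\le k+1$ such that $I:u$ and $I+Su$ are $k$-clean. $k$-decomposable ideals: for monomials $v=\mathbf x^{\mathbf a}$ and $w$, write $[v,w]=1$ if $x_i^{\mathbf a(i)}\nmid w$ for all $i\in\mathrm{supp}(v)$, and $[v,w]\neq1$ otherwise; set $I^v=(w\in G(I):[v,w]\ne 1)$ and $I_v=(w\in G(I):[v,w]=1)$. A monomial $v$ is a shedding monomial of $I$ if $I_v\ne 0$ and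 for each $u_i\in G(I_v)$ and each $l\in\mathrm{supp}(v)$ there exists $u_j\in G(I^v)$ with $u_j:u_i=x_l$. A monomial ideal $I$ is $k$-decomposable (recursively) if $|G(I)|=1$, or $I$ has a shedding monomial $v$ with $|\mathrm{supp}(v)|\le k+1$ such that $I^v$ and $I_v$ are $k$-decomposable. *)

theory Defs
  imports "HOL-Library.Poly_Mapping"
begin

(* The polynomial ring (Defs) S = K[x_v : v in V] with V a finite type of variables
  (so n = CARD('v)). *)

type_synonym ('v, 'a) mpoly = "('v \<Rightarrow>\<^sub>0 nat) \<Rightarrow>\<^sub>0 'a"

definition xmon :: "('v \<Rightarrow>\<^sub>0 nat) \<Rightarrow> ('v, 'a::comm_ring_1) mpoly" where
  "xmon a = Poly_Mapping.single a 1"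

definition var :: "'v \<Rightarrow> 'v \<Rightarrow>\<^sub>0 nat" where
  "var i = Poly_Mapping.single i 1"

definition mdvd :: "('v \<Rightarrow>\<^sub>0 nat) \<Rightarrow> ('v \<Rightarrow>\<^sub>0 nat) \<Rightarrow> bool" where
  "mdvd b a \<longleftrightarrow> (\<forall>i. Poly_Mapping.lookup b i \<le> Poly_Mapping.lookup a i)"

definition supp :: "('v \<Rightarrow>\<^sub>0 nat) \<Rightarrow> 'v set" where
  "supp a = Poly_Mapping.keys a"

definition mdeg :: "('v \<Rightarrow>\<^sub>0 nat) \<Rightarrow> nat" where
  "mdeg a = (\<Sum>i\<in>Poly_Mapping.keys a. Poly_Mapping.lookup a i)"

definition squarefree_mon :: "('v \<Rightarrow>\<^sub>0 nat) \<Rightarrow> bool" where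
  "squarefree_mon a \<longleftrightarrow> (\<forall>i. Poly_Mapping.lookup a i \<le> 1)"

definition is_ideal :: "'r::comm_ring_1 set \<Rightarrow> bool" where
  "is_ideal I \<longleftrightarrow> 0 \<in> I \<and> (\<forall>x\<in>I. \<forall>y\<in>I. x + y \<in> I) \<and> (\<forall>r. \<forall>x\<in>I. r * x \<in> I)"

definition ideal_gen :: "'r::comm_ring_1 set \<Rightarrow> 'r set" where
  "ideal_gen G = \<Inter>{J. is_ideal J \<and> G \<subseteq> J}"

definition colon :: "'r::comm_ring_1 set \<Rightarrow> 'r \<Rightarrow> 'r set" where
  "colon I f = {r. r * f \<in> I}"

definition prime_ideal :: "'r::comm_ring_1 set \<Rightarrow> bool" where
  "prime_ideal P \<longleftrightarrow> is_ideal P \<and> P \<noteq> UNIV \<and> (\<forall>a b. a * b \<in> P \<longrightarrow> a \<in> P \<or> b \<in> P)"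

definition min_primes :: "'r::comm_ring_1 set \<Rightarrow> 'r set set" where
  "min_primes I = {P. prime_ideal P \<and> I \<subseteq> P \<and>
      (\<forall>Q. prime_ideal Q \<and> I \<subseteq> Q \<and> Q \<subseteq> P \<longrightarrow> Q = P)}"

text \<open>Associated primes (Noetherian ring): primes of the form I : f\<close>
definition ass_primes :: "'r::comm_ring_1 set \<Rightarrow> 'r set set" where
  "ass_primes I = {P. prime_ideal P \<and> (\<exists>f. P = colon I f)}"

definition no_embedded_primes :: "'r::comm_ring_1 set \<Rightarrow> bool" where
  "no_embedded_primes I \<longleftrightarrow> ass_primes I \<subseteq> min_primes I"

definition monomial_ideal :: "('v, 'a::comm_ring_1) mpoly set \<Rightarrow> bool" where
  "monomial_ideal I \<longleftrightarrow> (\<exists>G. I = ideal_gen (xmon ` G))"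

definition mingens :: "('v, 'a::comm_ring_1) mpoly set \<Rightarrow> ('v \<Rightarrow>\<^sub>0 nat) set" where
  "mingens I = {a. xmon a \<in> I \<and> (\<forall>b. xmon b \<in> I \<and> mdvd b a \<longrightarrow> b = a)}"

definition sqmon :: "'v set \<Rightarrow> 'v \<Rightarrow>\<^sub>0 nat" where
  "sqmon F = (\<Sum>i\<in>F. var i)"

definition SR_ideal :: "'v set set \<Rightarrow> ('v, 'a::comm_ring_1) mpoly set" where
  "SR_ideal \<Delta> = ideal_gen {xmon (sqmon F) | F. F \<notin> \<Delta>}"

text \<open>the simplicial complex Delta with I = I_Delta (for squarefree I)\<close>
definition SR_complex :: "('v, 'a::comm_ring_1) mpoly set \<Rightarrow> 'v set set" where
  "SR_complex I = {F. xmon (sqmon F) \<notin> I}"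

definition alex_dual_complex :: "'v set set \<Rightarrow> 'v set set" where
  "alex_dual_complex \<Delta> = {F. (UNIV - F) \<notin> \<Delta>}"

definition alexander_dual :: "('v::finite, 'a::comm_ring_1) mpoly set \<Rightarrow> ('v, 'a) mpoly set" where
  "alexander_dual I = SR_ideal (alex_dual_complex (SR_complex I))"

definition cleaner :: "('v, 'a::comm_ring_1) mpoly set \<Rightarrow> ('v \<Rightarrow>\<^sub>0 nat) \<Rightarrow> bool" where
  "cleaner I u \<longleftrightarrow> u \<noteq> 0 \<and> xmon u \<notin> I \<and>
     min_primes (ideal_gen (insert (xmon u) I)) \<subseteq> min_primes I"

inductive k_clean :: "nat \<Rightarrow> ('v, 'a::comm_ring_1) mpoly set \<Rightarrow> bool" for k where
  prime: "monomial_ideal I \<Longrightarrow> I \<noteq> UNIV \<Longrightarrow> prime_ideal I \<Longrightarrow> k_clean k I"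
| step: "monomial_ideal I \<Longrightarrow> I \<noteq> UNIV \<Longrightarrow> no_embedded_primes I \<Longrightarrow> cleaner I u \<Longrightarrow>
         card (supp u) \<le> k + 1 \<Longrightarrow> k_clean k (colon I (xmon u)) \<Longrightarrow>
         k_clean k (ideal_gen (insert (xmon u) I)) \<Longrightarrow> k_clean k I"

definition bracket_one :: "('v \<Rightarrow>\<^sub>0 nat) \<Rightarrow> ('v \<Rightarrow>\<^sub>0 nat) \<Rightarrow> bool" where
  "bracket_one v w \<longleftrightarrow> (\<forall>i\<in>supp v. \<not> mdvd (Poly_Mapping.single i (Poly_Mapping.lookup v i)) w)"

definition upper_part :: "('v, 'a::comm_ring_1) mpoly set \<Rightarrow> ('v \<Rightarrow>\<^sub>0 nat) \<Rightarrow> ('v, 'a) mpoly set" where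
  "upper_part I v = ideal_gen (xmon ` {w\<in>mingens I. \<not> bracket_one v w})"

definition lower_part :: "('v, 'a::comm_ring_1) mpoly set \<Rightarrow> ('v \<Rightarrow>\<^sub>0 nat) \<Rightarrow> ('v, 'a) mpoly set" where
  "lower_part I v = ideal_gen (xmon ` {w\<in>mingens I. bracket_one v w})"

text \<open>monomial colon u : w = u / gcd(u,w), as exponent vectors\<close>
definition mon_colon :: "('v \<Rightarrow>\<^sub>0 nat) \<Rightarrow> ('v \<Rightarrow>\<^sub>0 nat) \<Rightarrow> 'v \<Rightarrow>\<^sub>0 nat" where
  "mon_colon u w = u - w"

definition shedding :: "('v, 'a::comm_ring_1) mpoly set \<Rightarrow> ('v \<Rightarrow>\<^sub>0 nat) \<Rightarrow> bool" where
  "shedding I v \<longleftrightarrow> lower_part I v \<noteq> {0} \<and>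
     (\<forall>ui\<in>mingens (lower_part I v). \<forall>l\<in>supp v.
        \<exists>uj\<in>mingens (upper_part I v). mon_colon uj ui = var l)"

inductive k_decomposable :: "nat \<Rightarrow> ('v, 'a::comm_ring_1) mpoly set \<Rightarrow> bool" for k where
  single: "monomial_ideal I \<Longrightarrow> card (mingens I) = 1 \<Longrightarrow> k_decomposable k I"
| step: "monomial_ideal I \<Longrightarrow> shedding I v \<Longrightarrow> card (supp v) \<le> k + 1 \<Longrightarrow>
         k_decomposable k (upper_part I v) \<Longrightarrow> k_decomposable k (lower_part I v) \<Longrightarrow>
         k_decomposable k I"

end

theory Submission
  imports Defs
begin

abbreviation keys where "keys \<equiv> Poly_Mapping.keys"
abbreviation lookup where "lookup \<equiv> Poly_Mapping.lookup"

lemma ideal_gen_ideal: "is_ideal (ideal_gen G)"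
  unfolding ideal_gen_def is_ideal_def by auto

lemma ideal_gen_sub: "G \<subseteq> ideal_gen G"
  unfolding ideal_gen_def by auto

lemma ideal_gen_least: "is_ideal J \<Longrightarrow> G \<subseteq> J \<Longrightarrow> ideal_gen G \<subseteq> J"
  unfolding ideal_gen_def by auto

lemma ideal_sum:
  assumes "is_ideal J" "finite A" "\<And>x. x \<in> A \<Longrightarrow> f x \<in> J" shows "sum f A \<in> J"
  using assms(2,3) by (induction A rule: finite_induct) (use assms(1) in \<open>auto simp: is_ideal_def\<close>)

lemma ideal_mult: "is_ideal J \<Longrightarrow> x \<in> J \<Longrightarrow> r * x \<in> J"
  by (auto simp: is_ideal_def)

lemma xmon_mult: "xmon a * xmon b = (xmon (a + b) :: ('v,'a::comm_ring_1) mpoly)"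
  by (simp add: xmon_def mult_single)

lemma keys_xmon[simp]: "keys (xmon a :: ('v,'a::comm_ring_1) mpoly) = {a}"
  by (simp add: xmon_def)

lemma xmon_nz[simp]: "(xmon a :: ('v,'a::comm_ring_1) mpoly) \<noteq> 0"
  by (metis xmon_def lookup_single_eq one_neq_zero lookup_zero)

lemma mdvd_add: "mdvd g b \<Longrightarrow> mdvd g (a + b)"
  by (auto simp: mdvd_def lookup_add intro: le_add2 order_trans)

lemma mdvd_refl[simp]: "mdvd a a" by (simp add: mdvd_def)

lemma mdvd_trans: "mdvd a b \<Longrightarrow> mdvd b c \<Longrightarrow> mdvd a c"
  by (auto simp: mdvd_def intro: order_trans)

lemma mdvd_antisym: "mdvd a b \<Longrightarrow> mdvd b a \<Longrightarrow> a = b"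
  by (auto simp: mdvd_def intro!: poly_mapping_eqI intro: antisym)

lemma mdvd_minus_add: "mdvd g a \<Longrightarrow> (a - g) + g = a"
  by (auto simp: mdvd_def intro!: poly_mapping_eqI simp: lookup_add lookup_minus)

lemma poly_expand:
  "(f :: ('v,'a::comm_ring_1) mpoly) = (\<Sum>a\<in>keys f. Poly_Mapping.single 0 (lookup f a) * xmon a)"
proof (rule poly_mapping_eqI)
  fix k
  have "lookup (\<Sum>a\<in>keys f. Poly_Mapping.single 0 (lookup f a) * xmon a) k
      = (\<Sum>a\<in>keys f. lookup f a when a = k)"
    by (simp add: lookup_sum xmon_def mult_single lookup_single)
  also have "\<dots> = lookup f k"
  proof (cases "k \<in> keys f")
    case True
    then have "(\<Sum>a\<in>keys f. lookup f a when a = k) = (\<Sum>a\<in>{k}. lookup f a when a = k)"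
      by (intro sum.mono_neutral_right) auto
    then show ?thesis by simp
  next
    case False
    then show ?thesis by (auto simp: when_def in_keys_iff intro!: sum.neutral)
  qed
  finally show "lookup f k = lookup (\<Sum>a\<in>keys f. Poly_Mapping.single 0 (lookup f a) * xmon a) k" by simp
qed

definition memchar :: "('v \<Rightarrow>\<^sub>0 nat) set \<Rightarrow> ('v,'a::comm_ring_1) mpoly set" where
  "memchar G = {f. \<forall>a\<in>keys f. \<exists>g\<in>G. mdvd g a}"

lemma memchar_ideal: "is_ideal (memchar G)"
  unfolding is_ideal_def memchar_def
proof (intro conjI ballI allI)
  fix x y :: "('a,'b) mpoly"
  assume x: "x \<in> {f. \<forall>a\<in>keys f. \<exists>g\<in>G. mdvd g a}" and y: "y \<in> {f. \<forall>a\<in>keys f. \<exists>g\<in>G. mdvd g a}"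
  show "x + y \<in> {f. \<forall>a\<in>keys f. \<exists>g\<in>G. mdvd g a}"
    using x y keys_add[of x y] by blast
next
  fix r x :: "('a,'b) mpoly"
  assume x: "x \<in> {f. \<forall>a\<in>keys f. \<exists>g\<in>G. mdvd g a}"
  show "r * x \<in> {f. \<forall>a\<in>keys f. \<exists>g\<in>G. mdvd g a}"
  proof (clarsimp)
    fix a assume "a \<in> keys (r * x)"
    then obtain b c where "a = b + c" "c \<in> keys x" using keys_mult[of r x] by blast
    then show "\<exists>g\<in>G. mdvd g a" using x mdvd_add by blast
  qed
qed auto

lemma mon_ideal_mem:
  "(f :: ('v,'a::comm_ring_1) mpoly) \<in> ideal_gen (xmon ` G) \<longleftrightarrow> (\<forall>a\<in>keys f. \<exists>g\<in>G. mdvd g a)"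
proof
  assume "f \<in> ideal_gen (xmon ` G)"
  moreover have "ideal_gen (xmon ` G) \<subseteq> (memchar G :: ('v,'a) mpoly set)"
    by (rule ideal_gen_least[OF memchar_ideal]) (auto simp: memchar_def, metis mdvd_refl)
  ultimately show "\<forall>a\<in>keys f. \<exists>g\<in>G. mdvd g a" by (auto simp: memchar_def)
next
  assume H: "\<forall>a\<in>keys f. \<exists>g\<in>G. mdvd g a"
  have "(\<Sum>a\<in>keys f. Poly_Mapping.single 0 (lookup f a) * xmon a) \<in> ideal_gen (xmon ` G)"
  proof (rule ideal_sum[OF ideal_gen_ideal])
    fix a assume "a \<in> keys f"
    then obtain g where g: "g \<in> G" "mdvd g a" using H by blast
    have "xmon a = xmon (a - g) * (xmon g :: ('v,'a) mpoly)"
      using mdvd_minus_add[OF g(2)] by (simp add: xmon_mult)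
    moreover have "(xmon g :: ('v,'a) mpoly) \<in> ideal_gen (xmon ` G)" using g ideal_gen_sub by blast
    ultimately have "(xmon a :: ('v,'a) mpoly) \<in> ideal_gen (xmon ` G)"
      by (simp add: ideal_mult[OF ideal_gen_ideal])
    then show "Poly_Mapping.single 0 (lookup f a) * xmon a \<in> ideal_gen (xmon ` G)"
      by (simp add: ideal_mult[OF ideal_gen_ideal])
  qed simp
  then show "f \<in> ideal_gen (xmon ` G)" using poly_expand[of f] by simp
qed

lemma mon_ideal_xmon:
  "(xmon a :: ('v,'a::comm_ring_1) mpoly) \<in> ideal_gen (xmon ` G) \<longleftrightarrow> (\<exists>g\<in>G. mdvd g a)"
  by (simp add: mon_ideal_mem)

lemma mon_ideal_mem':
  "(f :: ('v,'a::comm_ring_1) mpoly) \<in> ideal_gen (xmon ` G) \<longleftrightarrow> (\<forall>a\<in>keys f. xmon a \<in> (ideal_gen (xmon ` G) :: ('v,'a) mpoly set))"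
  by (simp add: mon_ideal_mem mon_ideal_xmon)

lemma expand_single:
  "(f :: ('v,'a::comm_ring_1) mpoly) = (\<Sum>a\<in>keys f. Poly_Mapping.single a (lookup f a))"
proof -
  have "\<And>a. Poly_Mapping.single 0 (lookup f a) * xmon a = Poly_Mapping.single a (lookup f a)"
    by (simp add: xmon_def mult_single)
  then show ?thesis using poly_expand[of f] by simp
qed

lemma mpoly_no_zero_div:
  fixes f g :: "('v::finite, 'a::idom) mpoly"
  assumes "f \<noteq> 0" "g \<noteq> 0" shows "f * g \<noteq> 0"
proof -
  obtain e :: "'v \<Rightarrow> nat" and n where e: "inj_on e UNIV"
    using finite_imp_inj_to_nat_seg[of "UNIV :: 'v set"] by auto
  define h :: "('v \<Rightarrow>\<^sub>0 nat) \<Rightarrow> (nat \<Rightarrow>\<^sub>0 nat)" where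
    "h a = (\<Sum>v\<in>UNIV. Poly_Mapping.single (e v) (lookup a v))" for a
  have hadd: "h (a + b) = h a + h b" for a b
    by (simp add: h_def lookup_add single_add sum.distrib)
  have hlook: "lookup (h a) (e v) = lookup a v" for a v
  proof -
    have "lookup (h a) (e v) = (\<Sum>w\<in>UNIV. lookup a w when e w = e v)"
      by (simp add: h_def lookup_sum lookup_single)
    also have "\<dots> = (\<Sum>w\<in>{v}. lookup a w when e w = e v)"
      by (rule sum.mono_neutral_right) (use e in \<open>auto simp: inj_on_def when_def split: if_splits\<close>)
    finally show ?thesis by simp
  qed
  have hinj: "h a = h b \<Longrightarrow> a = b" for a b
    by (rule poly_mapping_eqI) (metis hlook)
  have kf: "finite (keys f)" "keys f \<noteq> {}" using assms by auto
  have kg: "finite (keys g)" "keys g \<noteq> {}" using assms by auto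
  obtain a0 where a0: "a0 \<in> keys f" "\<And>a. a \<in> keys f \<Longrightarrow> h a \<le> h a0"
  proof -
    have "Max (h ` keys f) \<in> h ` keys f" using kf by auto
    then obtain a0 where "a0 \<in> keys f" "h a0 = Max (h ` keys f)" by auto
    then show ?thesis using that kf by auto
  qed
  obtain b0 where b0: "b0 \<in> keys g" "\<And>b. b \<in> keys g \<Longrightarrow> h b \<le> h b0"
  proof -
    have "Max (h ` keys g) \<in> h ` keys g" using kg by auto
    then obtain b0 where "b0 \<in> keys g" "h b0 = Max (h ` keys g)" by auto
    then show ?thesis using that kg by auto
  qed
  have uniq: "a = a0 \<and> b = b0" if "a \<in> keys f" "b \<in> keys g" "a + b = a0 + b0" for a b
  proof -
    have ha: "h a \<le> h a0" and hb: "h b \<le> h b0" using that a0 b0 by auto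
    have "h a + h b = h a0 + h b0" using that(3) hadd by metis
    then have "h a = h a0"
      using ha hb add_less_le_mono[of "h a" "h a0" "h b" "h b0"] by (metis order.not_eq_order_implies_strict order_less_irrefl)
    then have "a = a0" using hinj by blast
    then show ?thesis using that(3) by simp
  qed
  have "f * g = (\<Sum>a\<in>keys f. \<Sum>b\<in>keys g. Poly_Mapping.single a (lookup f a) * Poly_Mapping.single b (lookup g b))"
    by (subst expand_single[of f], subst expand_single[of g]) (simp add: sum_product)
  then have "lookup (f * g) (a0 + b0) = (\<Sum>a\<in>keys f. \<Sum>b\<in>keys g. (lookup f a * lookup g b when a + b = a0 + b0))"
    by (simp add: mult_single lookup_sum lookup_single)
  also have "\<dots> = (\<Sum>a\<in>keys f. \<Sum>b\<in>keys g. (if a = a0 then (if b = b0 then lookup f a0 * lookup g b0 else 0) else 0))"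
    by (intro sum.cong refl) (use uniq in \<open>auto simp: when_def\<close>)
  also have "\<dots> = lookup f a0 * lookup g b0"
  proof -
    have "\<And>a. (\<Sum>b\<in>keys g. (if a = a0 then (if b = b0 then lookup f a0 * lookup g b0 else 0) else 0))
         = (if a = a0 then lookup f a0 * lookup g b0 else 0)"
      using b0 kg by (auto simp: sum.delta)
    then show ?thesis using a0 kf by (simp add: sum.delta)
  qed
  also have "\<dots> \<noteq> 0" using a0 b0 by (simp add: in_keys_iff)
  finally show ?thesis by auto
qed

definition vprime :: "'v set \<Rightarrow> ('v,'a::comm_ring_1) mpoly set" where
  "vprime A = ideal_gen (xmon ` (var ` A))"

lemma lookup_var: "lookup (var i) j = (if i = j then 1 else 0)"
  by (simp add: var_def lookup_single)

lemma keys_var[simp]: "keys (var i) = {i}"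
  by (simp add: var_def)

lemma mdvd_var: "mdvd (var i) a \<longleftrightarrow> i \<in> keys a"
  by (auto simp: mdvd_def lookup_var in_keys_iff split: if_splits)

lemma mdvd_keys: "mdvd g a \<Longrightarrow> keys g \<subseteq> keys a"
  by (auto simp: mdvd_def in_keys_iff) (use less_le_trans in blast)

lemma vprime_mem: "(f :: ('v,'a::comm_ring_1) mpoly) \<in> vprime A \<longleftrightarrow> (\<forall>a\<in>keys f. keys a \<inter> A \<noteq> {})"
  by (auto simp: vprime_def mon_ideal_mem mdvd_var)

lemma vprime_xmon: "(xmon a :: ('v,'a::comm_ring_1) mpoly) \<in> vprime A \<longleftrightarrow> keys a \<inter> A \<noteq> {}"
  by (simp add: vprime_mem)

lemma ideal_neg: "is_ideal J \<Longrightarrow> x \<in> J \<Longrightarrow> - x \<in> J"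
  using ideal_mult[of J x "-1"] by simp

lemma ideal_add: "is_ideal J \<Longrightarrow> x \<in> J \<Longrightarrow> y \<in> J \<Longrightarrow> x + y \<in> J"
  by (simp add: is_ideal_def)

lemma ideal_diff: "is_ideal J \<Longrightarrow> x \<in> J \<Longrightarrow> y \<in> J \<Longrightarrow> x - y \<in> J"
  using ideal_add[of J x "-y"] ideal_neg[of J y] by simp

lemma keys_add_nat: "keys ((a::'v \<Rightarrow>\<^sub>0 nat) + b) = keys a \<union> keys b"
  by (auto simp: in_keys_iff lookup_add)

lemma split_poly:
  fixes f :: "('v,'a::comm_ring_1) mpoly"
  obtains f1 f2 where "f = f1 + f2" "keys f1 = {m\<in>keys f. Q m}" "keys f2 \<subseteq> {m\<in>keys f. \<not> Q m}"
proof -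
  define f1 where "f1 = (\<Sum>m\<in>{m\<in>keys f. Q m}. Poly_Mapping.single m (lookup f m))"
  define f2 where "f2 = (\<Sum>m\<in>{m\<in>keys f. \<not> Q m}. Poly_Mapping.single m (lookup f m))"
  have "f = f1 + f2"
  proof -
    have "keys f = {m\<in>keys f. Q m} \<union> {m\<in>keys f. \<not> Q m}" by auto
    then have "(\<Sum>a\<in>keys f. Poly_Mapping.single a (lookup f a)) = f1 + f2"
      unfolding f1_def f2_def by (metis (no_types, lifting) sum.union_disjoint finite_keys
          finite_Un disjoint_iff mem_Collect_eq)
    then show ?thesis using expand_single[of f] by simp
  qed
  moreover have "keys f2 \<subseteq> {m\<in>keys f. \<not> Q m}"
    unfolding f2_def by (rule order_trans[OF keys_sum]) auto
  moreover have "keys f1 = {m\<in>keys f. Q m}"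
  proof -
    have "lookup f1 k = (if k \<in> keys f \<and> Q k then lookup f k else 0)" for k
    proof -
      have "lookup f1 k = (\<Sum>m\<in>{m\<in>keys f. Q m}. lookup f m when m = k)"
        by (simp add: f1_def lookup_sum lookup_single)
      also have "\<dots> = (if k \<in> keys f \<and> Q k then lookup f k else 0)"
      proof (cases "k \<in> keys f \<and> Q k")
        case True
        then have "(\<Sum>m\<in>{m\<in>keys f. Q m}. lookup f m when m = k) = (\<Sum>m\<in>{k}. lookup f m when m = k)"
          by (intro sum.mono_neutral_right) auto
        then show ?thesis using True by simp
      next
        case False then show ?thesis by (auto simp: when_def intro!: sum.neutral)
      qed
      finally show ?thesis .
    qed
    then show ?thesis by (auto simp: in_keys_iff split: if_splits)
  qed
  ultimately show ?thesis using that by blast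
qed

lemma vprime_prime:
  "prime_ideal (vprime A :: ('v::finite,'a::idom) mpoly set)"
  unfolding prime_ideal_def
proof (intro conjI allI impI)
  show "is_ideal (vprime A :: ('v,'a) mpoly set)" by (simp add: vprime_def ideal_gen_ideal)
  have "(1 :: ('v,'a) mpoly) = xmon 0" by (simp add: xmon_def one_poly_mapping.abs_eq
        Poly_Mapping.single.abs_eq when_def)
  moreover have "(xmon 0 :: ('v,'a) mpoly) \<notin> vprime A" by (simp add: vprime_xmon)
  ultimately have "(1 :: ('v,'a) mpoly) \<notin> vprime A" by simp
  then show "(vprime A :: ('v,'a) mpoly set) \<noteq> UNIV" by auto
next
  fix a b :: "('v,'a) mpoly"
  assume ab: "a * b \<in> vprime A"
  show "a \<in> vprime A \<or> b \<in> vprime A"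
  proof (rule ccontr)
    assume nn: "\<not> (a \<in> vprime A \<or> b \<in> vprime A)"
    have I: "is_ideal (vprime A :: ('v,'a) mpoly set)" by (simp add: vprime_def ideal_gen_ideal)
    obtain a1 a2 where a: "a = a1 + a2" "keys a1 = {m\<in>keys a. keys m \<inter> A = {}}"
      "keys a2 \<subseteq> {m\<in>keys a. \<not> keys m \<inter> A = {}}"
      using split_poly[of a "\<lambda>m. keys m \<inter> A = {}"] by blast
    obtain b1 b2 where b: "b = b1 + b2" "keys b1 = {m\<in>keys b. keys m \<inter> A = {}}"
      "keys b2 \<subseteq> {m\<in>keys b. \<not> keys m \<inter> A = {}}"
      using split_poly[of b "\<lambda>m. keys m \<inter> A = {}"] by blast
    have a2: "a2 \<in> vprime A" using a(3) by (auto simp: vprime_mem)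
    have b2: "b2 \<in> vprime A" using b(3) by (auto simp: vprime_mem)
    have a1: "a1 \<noteq> 0" using nn a(2) by (auto simp: vprime_mem)
    have b1: "b1 \<noteq> 0" using nn b(2) by (auto simp: vprime_mem)
    have "a1 * b1 = a * b - a1 * b2 - a2 * b" using a(1) b(1) by (simp add: algebra_simps)
    moreover have "a1 * b2 \<in> vprime A" using ideal_mult[OF I b2, of a1] by (simp add: mult.commute)
    moreover have "a2 * b \<in> vprime A" using ideal_mult[OF I a2, of b] by (simp add: mult.commute)
    ultimately have "a1 * b1 \<in> vprime A" using ab I by (simp add: ideal_diff)
    moreover have "\<forall>m\<in>keys (a1 * b1). keys m \<inter> A = {}"
    proof
      fix m assume "m \<in> keys (a1 * b1)"
      then obtain x y where "m = x + y" "x \<in> keys a1" "y \<in> keys b1" using keys_mult by blast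
      then show "keys m \<inter> A = {}" using a(2) b(2) by (auto simp: keys_add_nat)
    qed
    ultimately have "keys (a1 * b1) = {}" by (auto simp: vprime_mem)
    then have "a1 * b1 = 0" by simp
    then show False using mpoly_no_zero_div[OF a1 b1] by simp
  qed
qed

lemma vprime_var: "(xmon (var i) :: ('v,'a::comm_ring_1) mpoly) \<in> vprime A \<longleftrightarrow> i \<in> A"
  by (simp add: vprime_xmon)

lemma vprime_mono: "A \<subseteq> B \<Longrightarrow> (vprime A :: ('v,'a::comm_ring_1) mpoly set) \<subseteq> vprime B"
  by (fastforce simp: vprime_mem)

lemma vprime_inj: "(vprime A :: ('v,'a::comm_ring_1) mpoly set) = vprime B \<Longrightarrow> A = B"
  by (metis vprime_var subsetI subset_antisym)

definition msize :: "('v::finite \<Rightarrow>\<^sub>0 nat) \<Rightarrow> nat" where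
  "msize a = (\<Sum>v\<in>UNIV. lookup a v)"

lemma msize_add_var: "msize (b + var i) = Suc (msize b)"
proof -
  have "msize (b + var i) = msize b + (\<Sum>v\<in>UNIV. lookup (var i) v)"
    by (simp add: msize_def lookup_add sum.distrib)
  also have "(\<Sum>v\<in>UNIV. lookup (var i) v) = 1"
    by (simp add: lookup_var)
  finally show ?thesis by simp
qed

lemma prime_xmon:
  assumes P: "prime_ideal (Q :: ('v::finite,'a::comm_ring_1) mpoly set)"
  shows "xmon a \<in> Q \<Longrightarrow> \<exists>i\<in>keys a. xmon (var i) \<in> Q"
proof (induction "msize a" arbitrary: a)
  case 0
  then have "a = 0" by (auto simp: msize_def intro!: poly_mapping_eqI)
  then have "(1 :: ('v,'a) mpoly) \<in> Q" using 0 by (simp add: xmon_def one_poly_mapping.abs_eq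
        Poly_Mapping.single.abs_eq when_def)
  then have "\<And>r. r \<in> Q" using P by (metis prime_ideal_def is_ideal_def mult.right_neutral)
  then show ?case using P by (auto simp: prime_ideal_def)
next
  case (Suc n)
  have "a \<noteq> 0" using Suc(2) by (auto simp: msize_def)
  then obtain i where i: "i \<in> keys a" by (metis in_keys_iff lookup_zero poly_mapping_eqI)
  define b where "b = a - var i"
  have ab: "a = b + var i" using mdvd_minus_add[of "var i" a] i by (simp add: mdvd_var b_def)
  have kb: "keys b \<subseteq> keys a" by (auto simp: b_def in_keys_iff lookup_minus)
  have "xmon a = xmon b * (xmon (var i) :: ('v,'a) mpoly)" using ab by (simp add: xmon_mult)
  then have "xmon b \<in> Q \<or> (xmon (var i) :: ('v,'a) mpoly) \<in> Q" using Suc(3) P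
    unfolding prime_ideal_def by metis
  then show ?case
  proof
    assume "xmon b \<in> Q"
    moreover have "n = msize b" using Suc(2) ab msize_add_var by (metis nat.inject)
    ultimately show ?thesis using Suc(1) kb by blast
  qed (use i in blast)
qed

definition cplx :: "('v,'a::comm_ring_1) mpoly set \<Rightarrow> 'v set set" where
  "cplx J = {F. \<forall>a. keys a \<subseteq> F \<longrightarrow> xmon a \<notin> J}"

definition facet :: "'v set \<Rightarrow> 'v set set \<Rightarrow> bool" where
  "facet F \<Delta> \<longleftrightarrow> F \<in> \<Delta> \<and> (\<forall>G\<in>\<Delta>. F \<subseteq> G \<longrightarrow> G = F)"

lemma sub_vprime_iff:
  assumes J: "J = ideal_gen (xmon ` G)"
  shows "J \<subseteq> (vprime A :: ('v,'a::comm_ring_1) mpoly set) \<longleftrightarrow> UNIV - A \<in> cplx J"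
proof -
  have 1: "J \<subseteq> vprime A \<longleftrightarrow> (\<forall>g\<in>G. keys g \<inter> A \<noteq> {})"
  proof
    assume "J \<subseteq> vprime A"
    then show "\<forall>g\<in>G. keys g \<inter> A \<noteq> {}" using J ideal_gen_sub[of "xmon ` G"] vprime_xmon[of _ A]
      by blast
  next
    assume "\<forall>g\<in>G. keys g \<inter> A \<noteq> {}"
    then show "J \<subseteq> vprime A" unfolding J
      by (intro ideal_gen_least) (auto simp: vprime_def[symmetric] vprime_xmon intro: ideal_gen_ideal[of "xmon ` var ` A", folded vprime_def])
  qed
  have 2: "UNIV - A \<in> cplx J \<longleftrightarrow> (\<forall>g\<in>G. keys g \<inter> A \<noteq> {})"
  proof
    assume H: "UNIV - A \<in> cplx J"
    show "\<forall>g\<in>G. keys g \<inter> A \<noteq> {}"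
    proof (intro ballI notI)
      fix g assume g: "g \<in> G" "keys g \<inter> A = {}"
      then have "keys g \<subseteq> UNIV - A" by auto
      then have "xmon g \<notin> J" using H by (auto simp: cplx_def)
      then show False using g J ideal_gen_sub by blast
    qed
  next
    assume H: "\<forall>g\<in>G. keys g \<inter> A \<noteq> {}"
    show "UNIV - A \<in> cplx J"
      unfolding cplx_def
    proof (intro CollectI allI impI)
      fix a :: "'v \<Rightarrow>\<^sub>0 nat" assume a: "keys a \<subseteq> UNIV - A"
      show "xmon a \<notin> J"
      proof
        assume "xmon a \<in> J"
        then obtain g where "g \<in> G" "mdvd g a" using J mon_ideal_xmon by blast
        then show False using H a mdvd_keys by blast
      qed
    qed
  qed
  show ?thesis using 1 2 by simp
qed

lemma prime_vprime_sub:
  assumes J: "J = ideal_gen (xmon ` G)" and Q: "prime_ideal (Q :: ('v::finite,'a::comm_ring_1) mpoly set)"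
    and JQ: "J \<subseteq> Q"
  shows "vprime {i. xmon (var i) \<in> Q} \<subseteq> Q" "J \<subseteq> vprime {i. xmon (var i) \<in> Q}"
proof -
  have IQ: "is_ideal Q" using Q by (simp add: prime_ideal_def)
  show "vprime {i. xmon (var i) \<in> Q} \<subseteq> Q"
    unfolding vprime_def by (rule ideal_gen_least[OF IQ]) auto
  show "J \<subseteq> vprime {i. xmon (var i) \<in> Q}"
    unfolding J
  proof (rule ideal_gen_least)
    show "is_ideal (vprime {i. xmon (var i) \<in> Q} :: ('v,'a) mpoly set)" by (simp add: vprime_def ideal_gen_ideal)
    show "xmon ` G \<subseteq> vprime {i. xmon (var i) \<in> Q}"
    proof
      fix x assume "x \<in> xmon ` G"
      then obtain g where g: "g \<in> G" "x = xmon g" by auto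
      then have "xmon g \<in> Q" using JQ J ideal_gen_sub by blast
      then obtain i where "i \<in> keys g" "xmon (var i) \<in> Q" using prime_xmon[OF Q] by blast
      then show "x \<in> vprime {i. xmon (var i) \<in> Q}" using g by (auto simp: vprime_xmon)
    qed
  qed
qed

lemma compl2[simp]: "UNIV - (UNIV - X) = X" by auto

lemma min_primesD: "P \<in> min_primes J \<Longrightarrow> prime_ideal Q \<Longrightarrow> J \<subseteq> Q \<Longrightarrow> Q \<subseteq> P \<Longrightarrow> Q = P"
  unfolding min_primes_def by blast

lemma min_primes_char:
  assumes J: "J = ideal_gen (xmon ` G)"
  shows "P \<in> min_primes (J :: ('v::finite,'a::idom) mpoly set) \<longleftrightarrow>
    (\<exists>F. facet F (cplx J) \<and> P = vprime (UNIV - F))"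
proof
  assume P: "P \<in> min_primes J"
  define B where "B = {i. (xmon (var i) :: ('v,'a) mpoly) \<in> P}"
  have Pp: "prime_ideal P" "J \<subseteq> P" using P by (auto simp: min_primes_def)
  have 1: "vprime B \<subseteq> P" "J \<subseteq> vprime B" unfolding B_def using prime_vprime_sub[OF J Pp] by simp_all
  have PB: "P = vprime B" using min_primesD[OF P vprime_prime[of B] 1(2) 1(1)] by simp
  have F: "UNIV - B \<in> cplx J" using 1(2) sub_vprime_iff[OF J] by blast
  have "facet (UNIV - B) (cplx J)"
    unfolding facet_def
  proof (intro conjI ballI impI)
    fix F' assume F': "F' \<in> cplx J" "UNIV - B \<subseteq> F'"
    have "J \<subseteq> vprime (UNIV - F')" using sub_vprime_iff[OF J, of "UNIV - F'"] F'(1) by simp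
    moreover have "UNIV - F' \<subseteq> B" using F'(2) by blast
    then have "(vprime (UNIV - F') :: ('v,'a) mpoly set) \<subseteq> P" using vprime_mono[of "UNIV - F'" B] PB by simp
    ultimately have "vprime (UNIV - F') = P" using min_primesD[OF P vprime_prime[of "UNIV - F'"]] by blast
    then have "UNIV - F' = B" using PB vprime_inj[of "UNIV - F'" B] by simp
    then show "F' = UNIV - B" by auto
  qed (rule F)
  then show "\<exists>F. facet F (cplx J) \<and> P = vprime (UNIV - F)" using PB by (intro exI[of _ "UNIV - B"]) simp
next
  assume "\<exists>F. facet F (cplx J) \<and> P = vprime (UNIV - F)"
  then obtain F where F: "facet F (cplx J)" "P = vprime (UNIV - F)" by blast
  have JP: "J \<subseteq> P" using F sub_vprime_iff[OF J, of "UNIV - F"] by (simp add: facet_def)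
  have PP: "prime_ideal P" using F(2) vprime_prime by simp
  have "\<forall>Q. prime_ideal Q \<and> J \<subseteq> Q \<and> Q \<subseteq> P \<longrightarrow> Q = P"
  proof (intro allI impI)
    fix Q assume Q: "prime_ideal Q \<and> J \<subseteq> Q \<and> Q \<subseteq> P"
    define B where "B = {i. (xmon (var i) :: ('v,'a) mpoly) \<in> Q}"
    have 1: "vprime B \<subseteq> Q" "J \<subseteq> vprime B" unfolding B_def using prime_vprime_sub[of J G Q] J Q by simp_all
    have "B \<subseteq> UNIV - F"
    proof
      fix i assume "i \<in> B"
      then have "(xmon (var i) :: ('v,'a) mpoly) \<in> vprime (UNIV - F)" using Q F(2) unfolding B_def by blast
      then show "i \<in> UNIV - F" by (simp only: vprime_var)
    qed
    then have "F \<subseteq> UNIV - B" by blast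
    moreover have "UNIV - B \<in> cplx J" using 1(2) sub_vprime_iff[OF J] by blast
    ultimately have "UNIV - B = F" using F(1) unfolding facet_def by blast
    then have "B = UNIV - F" by blast
    then have "vprime B = P" using F(2) by simp
    then show "Q = P" using 1 Q by blast
  qed
  then show "P \<in> min_primes J" using PP JP unfolding min_primes_def by blast
qed

definition complex :: "'v set set \<Rightarrow> bool" where
  "complex \<Delta> \<longleftrightarrow> {} \<in> \<Delta> \<and> (\<forall>F\<in>\<Delta>. \<forall>G. G \<subseteq> F \<longrightarrow> G \<in> \<Delta>)"

definition dclosed :: "'v set set \<Rightarrow> bool" where
  "dclosed \<Delta> \<longleftrightarrow> (\<forall>F\<in>\<Delta>. \<forall>G. G \<subseteq> F \<longrightarrow> G \<in> \<Delta>)"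

definition st :: "'v set set \<Rightarrow> 'v set \<Rightarrow> 'v set set" where
  "st \<Delta> \<sigma> = {F. F \<union> \<sigma> \<in> \<Delta>}"

definition del :: "'v set set \<Rightarrow> 'v set \<Rightarrow> 'v set set" where
  "del \<Delta> \<sigma> = {F\<in>\<Delta>. \<not> \<sigma> \<subseteq> F}"

definition shed :: "'v set set \<Rightarrow> 'v set \<Rightarrow> bool" where
  "shed \<Delta> \<sigma> \<longleftrightarrow> (\<forall>F. facet F (del \<Delta> \<sigma>) \<longrightarrow> facet F \<Delta>)"

inductive kdec :: "nat \<Rightarrow> 'v set set \<Rightarrow> bool" for k where
  simplex: "\<Delta> = Pow W \<Longrightarrow> kdec k \<Delta>"
| step: "\<sigma> \<in> \<Delta> \<Longrightarrow> \<sigma> \<noteq> {} \<Longrightarrow> card \<sigma> \<le> k + 1 \<Longrightarrow> shed \<Delta> \<sigma> \<Longrightarrow>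
         kdec k (st \<Delta> \<sigma>) \<Longrightarrow> kdec k (del \<Delta> \<sigma>) \<Longrightarrow> kdec k \<Delta>"

lemma dclosed_st: "dclosed \<Delta> \<Longrightarrow> dclosed (st \<Delta> \<sigma>)"
  unfolding dclosed_def st_def
proof (intro ballI allI impI CollectI)
  fix F G assume H: "\<forall>F\<in>\<Delta>. \<forall>G. G \<subseteq> F \<longrightarrow> G \<in> \<Delta>" "F \<in> {F. F \<union> \<sigma> \<in> \<Delta>}" "G \<subseteq> F"
  have "G \<union> \<sigma> \<subseteq> F \<union> \<sigma>" using H(3) by blast
  then show "G \<union> \<sigma> \<in> \<Delta>" using H(1,2) by simp
qed

lemma dclosed_del: "dclosed \<Delta> \<Longrightarrow> dclosed (del \<Delta> \<sigma>)"
  unfolding dclosed_def del_def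
proof (intro ballI allI impI CollectI conjI)
  fix F G assume H: "\<forall>F\<in>\<Delta>. \<forall>G. G \<subseteq> F \<longrightarrow> G \<in> \<Delta>" "F \<in> {F\<in>\<Delta>. \<not> \<sigma> \<subseteq> F}" "G \<subseteq> F"
  then show "G \<in> \<Delta>" by blast
  show "\<not> \<sigma> \<subseteq> G" using H(2,3) by auto
qed

lemma kdec_star:
  fixes \<Delta> :: "'v::finite set set"
  assumes "kdec k \<Delta>" shows "dclosed \<Delta> \<Longrightarrow> \<tau> \<in> \<Delta> \<Longrightarrow> kdec k (st \<Delta> \<tau>)"
  using assms
proof (induction arbitrary: \<tau> rule: kdec.induct)
  case (simplex \<Delta> W)
  then have "st \<Delta> \<tau> = Pow W" by (auto simp: st_def)
  then show ?case by (rule kdec.simplex)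
next
  case (step \<sigma> \<Delta>)
  show ?case
  proof (cases "\<tau> \<union> \<sigma> \<in> \<Delta>")
    case False
    then have "\<not> \<sigma> \<subseteq> \<tau>" using step.prems(2) by (metis sup.absorb1)
    then have t: "\<tau> \<in> del \<Delta> \<sigma>" using step.prems(2) by (simp add: del_def)
    have "st \<Delta> \<tau> = st (del \<Delta> \<sigma>) \<tau>"
    proof (intro set_eqI iffI)
      fix F assume F: "F \<in> st \<Delta> \<tau>"
      have "\<not> \<sigma> \<subseteq> F \<union> \<tau>"
      proof
        assume "\<sigma> \<subseteq> F \<union> \<tau>"
        then have "\<tau> \<union> \<sigma> \<subseteq> F \<union> \<tau>" by blast
        then show False using F False step.prems(1) unfolding dclosed_def st_def by blast
      qed
      then show "F \<in> st (del \<Delta> \<sigma>) \<tau>" using F by (simp add: st_def del_def)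
    qed (simp add: st_def del_def)
    then show ?thesis using step.IH(2)[OF dclosed_del[OF step.prems(1)] t] by simp
  next
    case True
    show ?thesis
    proof (cases "\<sigma> \<subseteq> \<tau>")
      case True
      then have t: "\<tau> \<in> st \<Delta> \<sigma>" using step.prems(2) by (simp add: st_def sup.absorb1)
      have "st \<Delta> \<tau> = st (st \<Delta> \<sigma>) \<tau>" using True by (auto simp: st_def sup.absorb1 Un_assoc)
      then show ?thesis using step.IH(1)[OF dclosed_st[OF step.prems(1)] t] by simp
    next
      case False
      define \<sigma>' where "\<sigma>' = \<sigma> - \<tau>"
      have t1: "\<tau> \<in> st \<Delta> \<sigma>" using True by (simp add: st_def)
      have t2: "\<tau> \<in> del \<Delta> \<sigma>" using False step.prems(2) by (simp add: del_def)
      have e1: "st (st \<Delta> \<tau>) \<sigma>' = st (st \<Delta> \<sigma>) \<tau>"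
      proof -
        have "\<And>F. F \<union> \<sigma>' \<union> \<tau> = F \<union> \<tau> \<union> \<sigma>" by (auto simp: \<sigma>'_def)
        then show ?thesis by (simp add: st_def)
      qed
      have e2: "del (st \<Delta> \<tau>) \<sigma>' = st (del \<Delta> \<sigma>) \<tau>"
        by (auto simp: st_def del_def \<sigma>'_def)
      show ?thesis
      proof (rule kdec.step[of \<sigma>'])
        show "\<sigma>' \<in> st \<Delta> \<tau>"
        proof -
          have "\<sigma>' \<union> \<tau> = \<tau> \<union> \<sigma>" by (auto simp: \<sigma>'_def)
          then show ?thesis using True by (simp add: st_def)
        qed
        show "\<sigma>' \<noteq> {}" using False by (auto simp: \<sigma>'_def)
        show "card \<sigma>' \<le> k + 1"
          using step.hyps(3) card_mono[of \<sigma> \<sigma>'] by (auto simp: \<sigma>'_def)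
        show "kdec k (st (st \<Delta> \<tau>) \<sigma>')" using e1 step.IH(1)[OF dclosed_st[OF step.prems(1)] t1] by simp
        show "kdec k (del (st \<Delta> \<tau>) \<sigma>')" using e2 step.IH(2)[OF dclosed_del[OF step.prems(1)] t2] by simp
        show "shed (st \<Delta> \<tau>) \<sigma>'"
          unfolding shed_def e2
        proof (intro allI impI)
          fix G assume G: "facet G (st (del \<Delta> \<sigma>) \<tau>)"
          have "G \<union> \<tau> \<in> st (del \<Delta> \<sigma>) \<tau>" using G by (simp add: facet_def st_def Un_assoc)
          then have tG: "\<tau> \<subseteq> G" using G unfolding facet_def by blast
          then have Gd: "G \<in> del \<Delta> \<sigma>" using G by (simp add: facet_def st_def sup.absorb1)
          have "facet G (del \<Delta> \<sigma>)"
            unfolding facet_def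
          proof (intro conjI ballI impI)
            fix H assume "H \<in> del \<Delta> \<sigma>" "G \<subseteq> H"
            then have "H \<in> st (del \<Delta> \<sigma>) \<tau>" using tG by (simp add: st_def sup.absorb1 order_trans)
            then show "H = G" using G \<open>G \<subseteq> H\<close> unfolding facet_def by blast
          qed (rule Gd)
          then have fG: "facet G \<Delta>" using step.hyps(4) by (simp add: shed_def)
          show "facet G (st \<Delta> \<tau>)"
            unfolding facet_def
          proof (intro conjI ballI impI)
            show "G \<in> st \<Delta> \<tau>" using fG tG by (simp add: facet_def st_def sup.absorb1)
            fix H assume H: "H \<in> st \<Delta> \<tau>" "G \<subseteq> H"
            then have "H \<union> \<tau> \<in> \<Delta>" "G \<subseteq> H \<union> \<tau>" by (auto simp: st_def)
            then have "H \<union> \<tau> = G" using fG unfolding facet_def by blast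
            then show "H = G" using H(2) by blast
          qed
        qed
      qed
    qed
  qed
qed

lemma finite_facet:
  fixes \<Delta> :: "'v::finite set set"
  assumes "F \<in> \<Delta>" shows "\<exists>M. facet M \<Delta> \<and> F \<subseteq> M"
proof -
  have "finite {G\<in>\<Delta>. F \<subseteq> G}" by simp
  moreover have "{G\<in>\<Delta>. F \<subseteq> G} \<noteq> {}" using assms by auto
  ultimately have "\<exists>m\<in>{G\<in>\<Delta>. F \<subseteq> G}. \<forall>b\<in>{G\<in>\<Delta>. F \<subseteq> G}. m \<le> b \<longrightarrow> m = b"
    by (rule finite_has_maximal)
  then obtain M where M: "M \<in> {G\<in>\<Delta>. F \<subseteq> G}" "\<forall>b\<in>{G\<in>\<Delta>. F \<subseteq> G}. M \<le> b \<longrightarrow> M = b"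
    by blast
  then have "facet M \<Delta>" unfolding facet_def by (metis (mono_tags, lifting) mem_Collect_eq order_trans)
  then show ?thesis using M by auto
qed

lemma facet_st: "\<sigma> \<in> \<Delta> \<Longrightarrow> facet F (st \<Delta> \<sigma>) \<longleftrightarrow> facet F \<Delta> \<and> \<sigma> \<subseteq> F"
proof
  assume F: "facet F (st \<Delta> \<sigma>)"
  have "(F \<union> \<sigma>) \<union> \<sigma> \<in> \<Delta>" using F by (simp add: facet_def st_def Un_assoc)
  then have "F \<union> \<sigma> \<in> st \<Delta> \<sigma>" by (simp add: st_def)
  then have e: "F \<union> \<sigma> = F" using F unfolding facet_def by blast
  then have sF: "\<sigma> \<subseteq> F" by blast
  have "facet F \<Delta>"
    unfolding facet_def
  proof (intro conjI ballI impI)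
    show "F \<in> \<Delta>" using F e by (simp add: facet_def st_def)
    fix H assume "H \<in> \<Delta>" "F \<subseteq> H"
    then have "H \<in> st \<Delta> \<sigma>" using sF by (simp add: st_def sup.absorb1 order_trans)
    then show "H = F" using F \<open>F \<subseteq> H\<close> unfolding facet_def by blast
  qed
  then show "facet F \<Delta> \<and> \<sigma> \<subseteq> F" using sF by simp
next
  assume F: "facet F \<Delta> \<and> \<sigma> \<subseteq> F"
  show "facet F (st \<Delta> \<sigma>)"
    unfolding facet_def
  proof (intro conjI ballI impI)
    show "F \<in> st \<Delta> \<sigma>" using F by (simp add: facet_def st_def sup.absorb1)
    fix H assume H: "H \<in> st \<Delta> \<sigma>" "F \<subseteq> H"
    then have "H \<union> \<sigma> \<in> \<Delta>" "F \<subseteq> H \<union> \<sigma>" by (auto simp: st_def)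
    then have "H \<union> \<sigma> = F" using F unfolding facet_def by blast
    then show "H = F" using H(2) by blast
  qed
qed

lemma facet_del: "facet F \<Delta> \<Longrightarrow> \<not> \<sigma> \<subseteq> F \<Longrightarrow> facet F (del \<Delta> \<sigma>)"
  unfolding facet_def del_def by auto

lemma facet_del_shed: "shed \<Delta> \<sigma> \<Longrightarrow> facet F (del \<Delta> \<sigma>) \<longleftrightarrow> facet F \<Delta> \<and> \<not> \<sigma> \<subseteq> F"
  using facet_del[of F \<Delta> \<sigma>] by (auto simp: shed_def facet_def del_def)

lemma complex_dclosed: "complex \<Delta> \<longleftrightarrow> {} \<in> \<Delta> \<and> dclosed \<Delta>"
  by (simp add: complex_def dclosed_def)

lemma complex_st: "complex \<Delta> \<Longrightarrow> \<sigma> \<in> \<Delta> \<Longrightarrow> complex (st \<Delta> \<sigma>)"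
  using dclosed_st[of \<Delta> \<sigma>] by (simp add: complex_dclosed st_def)

lemma complex_del: "complex \<Delta> \<Longrightarrow> \<sigma> \<noteq> {} \<Longrightarrow> complex (del \<Delta> \<sigma>)"
  using dclosed_del[of \<Delta> \<sigma>] by (simp add: complex_dclosed del_def)

lemma ideal_gen_insert: "ideal_gen (insert x (ideal_gen S)) = ideal_gen (insert x S)"
proof
  have "ideal_gen S \<subseteq> ideal_gen (insert x S)"
    by (rule ideal_gen_least[OF ideal_gen_ideal]) (use ideal_gen_sub in blast)
  then have "insert x (ideal_gen S) \<subseteq> ideal_gen (insert x S)" using ideal_gen_sub by blast
  then show "ideal_gen (insert x (ideal_gen S)) \<subseteq> ideal_gen (insert x S)"
    by (rule ideal_gen_least[OF ideal_gen_ideal])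
  have "insert x S \<subseteq> ideal_gen (insert x (ideal_gen S))"
    using ideal_gen_sub[of "insert x (ideal_gen S)"] ideal_gen_sub[of S] by blast
  then show "ideal_gen (insert x S) \<subseteq> ideal_gen (insert x (ideal_gen S))"
    by (rule ideal_gen_least[OF ideal_gen_ideal])
qed

lemma cplx_dclosed: "dclosed (cplx (J :: ('v,'b::comm_ring_1) mpoly set))"
  unfolding dclosed_def cplx_def
proof (intro ballI allI impI CollectI)
  fix F G and a :: "'v \<Rightarrow>\<^sub>0 nat" assume H: "F \<in> {F. \<forall>a. keys a \<subseteq> F \<longrightarrow> xmon a \<notin> J}" "G \<subseteq> F" "keys a \<subseteq> G"
  then have "keys a \<subseteq> F" by blast
  then show "xmon a \<notin> J" using H(1) by blast
qed

lemma keys_empty_iff: "keys (u :: 'v \<Rightarrow>\<^sub>0 nat) = {} \<longleftrightarrow> u = 0"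
  by (metis in_keys_iff lookup_zero poly_mapping_eqI all_not_in_conv keys_zero)

lemma cplx_insert:
  assumes J: "J = ideal_gen (xmon ` G)"
  shows "cplx (ideal_gen (insert (xmon u) J) :: ('v,'a::comm_ring_1) mpoly set) = del (cplx J) (keys u)"
proof -
  have J': "ideal_gen (insert (xmon u) J) = ideal_gen (xmon ` insert u G)"
    using J ideal_gen_insert[of "xmon u" "xmon ` G"] by simp
  show ?thesis
  proof (intro set_eqI iffI)
    fix F assume F: "F \<in> cplx (ideal_gen (insert (xmon u) J))"
    have 1: "\<forall>a. keys a \<subseteq> F \<longrightarrow> \<not> (\<exists>g\<in>insert u G. mdvd g a)"
      using F unfolding J' cplx_def mon_ideal_xmon by simp
    have "F \<in> cplx J" unfolding cplx_def J using 1 by (simp add: mon_ideal_xmon)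
    moreover have "\<not> keys u \<subseteq> F" using 1 mdvd_refl by blast
    ultimately show "F \<in> del (cplx J) (keys u)" by (simp add: del_def)
  next
    fix F assume F: "F \<in> del (cplx J) (keys u)"
    have "\<forall>a. keys a \<subseteq> F \<longrightarrow> \<not> (\<exists>g\<in>insert u G. mdvd g a)"
    proof (intro allI impI notI)
      fix a :: "'v \<Rightarrow>\<^sub>0 nat" assume a: "keys a \<subseteq> F" "\<exists>g\<in>insert u G. mdvd g a"
      then obtain g where g: "g \<in> insert u G" "mdvd g a" by blast
      show False
      proof (cases "g = u")
        case True
        then show ?thesis using F a(1) mdvd_keys[OF g(2)] by (auto simp: del_def)
      next
        case False
        then have "g \<in> G" using g by simp
        then have "(xmon a :: ('v,'a) mpoly) \<in> J" unfolding J using g(2) by (auto simp: mon_ideal_xmon)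
        then show ?thesis using F a(1) by (auto simp: del_def cplx_def)
      qed
    qed
    then show "F \<in> cplx (ideal_gen (insert (xmon u) J))"
      unfolding J' cplx_def mon_ideal_xmon by simp
  qed
qed

lemma cplx_colon:
  assumes I: "is_ideal (J :: ('v,'a::comm_ring_1) mpoly set)"
  shows "st (cplx (colon J (xmon u))) (keys u) = st (cplx J) (keys u)"
proof (intro set_eqI)
  fix F
  have "F \<union> keys u \<in> cplx (colon J (xmon u)) \<longleftrightarrow> F \<union> keys u \<in> cplx J"
  proof
    assume H: "F \<union> keys u \<in> cplx (colon J (xmon u))"
    show "F \<union> keys u \<in> cplx J"
      unfolding cplx_def
    proof (intro CollectI allI impI notI)
      fix a :: "'v \<Rightarrow>\<^sub>0 nat" assume a: "keys a \<subseteq> F \<union> keys u" "xmon a \<in> J"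
      have "xmon a * xmon u \<in> J" using ideal_mult[OF I a(2), of "xmon u"] by (simp add: mult.commute)
      then have "xmon a \<in> colon J (xmon u)" by (simp add: colon_def)
      then show False using H a(1) by (auto simp: cplx_def)
    qed
  next
    assume H: "F \<union> keys u \<in> cplx J"
    show "F \<union> keys u \<in> cplx (colon J (xmon u))"
      unfolding cplx_def
    proof (intro CollectI allI impI notI)
      fix a :: "'v \<Rightarrow>\<^sub>0 nat" assume a: "keys a \<subseteq> F \<union> keys u" "xmon a \<in> colon J (xmon u)"
      then have "(xmon (a + u) :: ('v,'a) mpoly) \<in> J" by (simp add: colon_def xmon_mult)
      moreover have "keys (a + u) \<subseteq> F \<union> keys u" using a(1) by (auto simp: keys_add_nat)
      ultimately show False using H by (auto simp: cplx_def)
    qed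
  qed
  then show "F \<in> st (cplx (colon J (xmon u))) (keys u) \<longleftrightarrow> F \<in> st (cplx J) (keys u)"
    by (simp add: st_def)
qed

lemma cplx_prime:
  assumes P: "prime_ideal (J :: ('v::finite,'a::comm_ring_1) mpoly set)"
  shows "cplx J = Pow (UNIV - {i. xmon (var i) \<in> J})"
proof (intro set_eqI iffI)
  fix F assume F: "F \<in> cplx J"
  have "\<forall>i\<in>F. xmon (var i) \<notin> J"
  proof
    fix i assume "i \<in> F"
    then have "keys (var i) \<subseteq> F" by simp
    then show "xmon (var i) \<notin> J" using F by (simp add: cplx_def)
  qed
  then show "F \<in> Pow (UNIV - {i. xmon (var i) \<in> J})" by auto
next
  fix F assume F: "F \<in> Pow (UNIV - {i. xmon (var i) \<in> J})"
  show "F \<in> cplx J"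
    unfolding cplx_def
  proof (intro CollectI allI impI notI)
    fix a :: "'v \<Rightarrow>\<^sub>0 nat" assume a: "keys a \<subseteq> F" "xmon a \<in> J"
    then obtain i where "i \<in> keys a" "xmon (var i) \<in> J" using prime_xmon[OF P] by blast
    then show False using a(1) F by auto
  qed
qed

lemma kclean_kdec:
  fixes J :: "('v::finite,'a::idom) mpoly set"
  shows "k_clean k J \<Longrightarrow> kdec k (cplx J)"
proof (induction rule: k_clean.induct)
  case (prime I)
  show ?case using cplx_prime[OF prime(3)] by (rule kdec.simplex)
next
  case (step I u)
  obtain G where J: "I = ideal_gen (xmon ` G)" using step(1) by (auto simp: monomial_ideal_def)
  define \<sigma> where "\<sigma> = keys u"
  have delI: "cplx (ideal_gen (insert (xmon u) I)) = del (cplx I) \<sigma>"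
    using cplx_insert[OF J] by (simp add: \<sigma>_def)
  have IH2: "kdec k (del (cplx I) \<sigma>)" using step.IH(2) delI by simp
  show ?case
  proof (cases "\<sigma> \<in> cplx I")
    case False
    have "del (cplx I) \<sigma> = cplx I"
    proof -
      have "F \<in> cplx I \<Longrightarrow> \<not> \<sigma> \<subseteq> F" for F using False cplx_dclosed[of I] unfolding dclosed_def by blast
      then show ?thesis by (auto simp: del_def)
    qed
    then show ?thesis using IH2 by simp
  next
    case True
    show ?thesis
    proof (rule kdec.step[of \<sigma>])
      show "\<sigma> \<in> cplx I" by (rule True)
      show "\<sigma> \<noteq> {}" using step(4) by (simp add: cleaner_def \<sigma>_def keys_empty_iff)
      show "card \<sigma> \<le> k + 1" using step(5) by (simp add: supp_def \<sigma>_def)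
      show "kdec k (del (cplx I) \<sigma>)" by (rule IH2)
      have II: "is_ideal I" using J by (simp add: ideal_gen_ideal)
      have "\<sigma> \<in> cplx (colon I (xmon u))"
      proof -
        have "{} \<in> st (cplx I) \<sigma>" using True by (simp add: st_def)
        then have "{} \<in> st (cplx (colon I (xmon u))) \<sigma>" using cplx_colon[OF II, of u] by (simp add: \<sigma>_def)
        then show ?thesis by (simp add: st_def)
      qed
      then have "kdec k (st (cplx (colon I (xmon u))) \<sigma>)"
        using kdec_star[OF step.IH(1) cplx_dclosed] by blast
      then show "kdec k (st (cplx I) \<sigma>)" using cplx_colon[OF II, of u] by (simp add: \<sigma>_def)
      show "shed (cplx I) \<sigma>"
        unfolding shed_def
      proof (intro allI impI)
        fix F assume F: "facet F (del (cplx I) \<sigma>)"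
        have J': "ideal_gen (insert (xmon u) I) = ideal_gen (xmon ` insert u G)"
          using J ideal_gen_insert[of "xmon u" "xmon ` G"] by simp
        have "vprime (UNIV - F) \<in> min_primes (ideal_gen (insert (xmon u) I) :: ('v,'a) mpoly set)"
          using min_primes_char[OF J', of "vprime (UNIV - F)"] F delI by auto
        then have "vprime (UNIV - F) \<in> min_primes I" using step(4) by (auto simp: cleaner_def)
        then obtain F' where F': "facet F' (cplx I)" "(vprime (UNIV - F) :: ('v,'a) mpoly set) = vprime (UNIV - F')"
          using min_primes_char[OF J] by blast
        then have "UNIV - F = UNIV - F'" using vprime_inj by blast
        then have "F = F'" by blast
        then show "facet F (cplx I)" using F' by simp
      qed
    qed
  qed
qed

lemma lookup_sqmon: "lookup (sqmon F) i = (if i \<in> (F :: 'v::finite set) then 1 else 0)"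
proof -
  have "lookup (sqmon F) i = (\<Sum>j\<in>F. if j = i then 1 else 0)"
    by (simp add: sqmon_def lookup_sum lookup_var)
  also have "\<dots> = (if i \<in> F then 1 else 0)" by (simp add: sum.delta')
  finally show ?thesis .
qed

lemma keys_sqmon[simp]: "keys (sqmon (F :: 'v::finite set)) = F"
  by (auto simp: in_keys_iff lookup_sqmon split: if_splits)

lemma sqmon_inj: "sqmon (A :: 'v::finite set) = sqmon B \<Longrightarrow> A = B"
  by (metis keys_sqmon)

lemma mdvd_sqmon: "mdvd (sqmon (F :: 'v::finite set)) a \<longleftrightarrow> F \<subseteq> keys a"
  by (auto simp: mdvd_def lookup_sqmon in_keys_iff Suc_le_eq split: if_splits)

lemma sqmon_diff: "sqmon (A :: 'v::finite set) - sqmon B = sqmon (A - B)"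
  by (rule poly_mapping_eqI) (simp add: lookup_minus lookup_sqmon)

lemma sqmon_keys: "(\<forall>i. lookup a i \<le> 1) \<Longrightarrow> sqmon (keys (a :: 'v::finite \<Rightarrow>\<^sub>0 nat)) = a"
  by (rule poly_mapping_eqI) (auto simp: lookup_sqmon in_keys_iff le_Suc_eq, metis less_numeral_extra(3))

lemma sqmon_empty[simp]: "sqmon {} = 0"
  by (simp add: sqmon_def)

lemma sqmon_single: "sqmon {l} = var l"
  by (simp add: sqmon_def)

lemma SR_alt: "SR_ideal \<Delta> = ideal_gen (xmon ` {sqmon F | F. F \<notin> \<Delta>})"
  unfolding SR_ideal_def by (rule arg_cong[where f=ideal_gen]) blast

lemma SR_xmon:
  assumes "dclosed \<Delta>"
  shows "(xmon a :: ('v::finite,'a::comm_ring_1) mpoly) \<in> SR_ideal \<Delta> \<longleftrightarrow> keys a \<notin> \<Delta>"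
proof -
  have "(xmon a :: ('v,'a) mpoly) \<in> SR_ideal \<Delta> \<longleftrightarrow> (\<exists>F. F \<notin> \<Delta> \<and> F \<subseteq> keys a)"
    unfolding SR_alt mon_ideal_xmon by (auto simp: mdvd_sqmon)
  also have "\<dots> \<longleftrightarrow> keys a \<notin> \<Delta>" using assms unfolding dclosed_def by blast
  finally show ?thesis .
qed

lemma SR_mem:
  assumes "dclosed \<Delta>"
  shows "(f :: ('v::finite,'a::comm_ring_1) mpoly) \<in> SR_ideal \<Delta> \<longleftrightarrow> (\<forall>a\<in>keys f. keys a \<notin> \<Delta>)"
proof -
  have "f \<in> SR_ideal \<Delta> \<longleftrightarrow> (\<forall>a\<in>keys f. (xmon a :: ('v,'a) mpoly) \<in> SR_ideal \<Delta>)"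
    unfolding SR_alt by (rule mon_ideal_mem')
  then show ?thesis using SR_xmon[OF assms, where 'a='a] by simp
qed

lemma cplx_SR:
  assumes "dclosed \<Delta>"
  shows "cplx (SR_ideal \<Delta> :: ('v::finite,'a::comm_ring_1) mpoly set) = \<Delta>"
proof (intro set_eqI iffI)
  fix F assume "F \<in> cplx (SR_ideal \<Delta> :: ('v,'a) mpoly set)"
  then have "(xmon (sqmon F) :: ('v,'a) mpoly) \<notin> SR_ideal \<Delta>" by (simp add: cplx_def)
  then show "F \<in> \<Delta>" using SR_xmon[OF assms, of "sqmon F", where 'a='a] by simp
next
  fix F assume F: "F \<in> \<Delta>"
  show "F \<in> cplx (SR_ideal \<Delta> :: ('v,'a) mpoly set)"
    unfolding cplx_def
  proof (intro CollectI allI impI)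
    fix a :: "'v \<Rightarrow>\<^sub>0 nat" assume "keys a \<subseteq> F"
    then have "keys a \<in> \<Delta>" using F assms unfolding dclosed_def by blast
    then show "(xmon a :: ('v,'a) mpoly) \<notin> SR_ideal \<Delta>" using SR_xmon[OF assms, of a, where 'a='a] by simp
  qed
qed

lemma SR_monomial: "monomial_ideal (SR_ideal \<Delta>)"
  unfolding monomial_ideal_def SR_alt by blast

lemma SR_ideal_eqI:
  assumes "\<And>f. f \<in> J \<longleftrightarrow> (\<forall>a\<in>keys f. keys a \<notin> \<Delta>)" "dclosed \<Delta>"
  shows "J = (SR_ideal \<Delta> :: ('v::finite,'a::comm_ring_1) mpoly set)"
  using assms SR_mem[OF assms(2)] by blast

lemma mult_xmon_expand:
  "(f :: ('v,'a::comm_ring_1) mpoly) * xmon u = (\<Sum>a\<in>keys f. Poly_Mapping.single (a + u) (lookup f a))"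
proof -
  have "f * xmon u = (\<Sum>a\<in>keys f. Poly_Mapping.single a (lookup f a)) * xmon u"
    using expand_single[of f] by simp
  also have "\<dots> = (\<Sum>a\<in>keys f. Poly_Mapping.single a (lookup f a) * xmon u)"
    by (simp add: sum_distrib_right)
  also have "\<dots> = (\<Sum>a\<in>keys f. Poly_Mapping.single (a + u) (lookup f a))"
    by (simp add: xmon_def mult_single)
  finally show ?thesis .
qed

lemma keys_mult_xmon:
  "keys ((f :: ('v,'a::comm_ring_1) mpoly) * xmon u) = (\<lambda>a. a + u) ` keys f"
proof -
  have L: "lookup (f * xmon u) b = (\<Sum>a\<in>keys f. lookup f a when a + u = b)" for b
    by (simp add: mult_xmon_expand lookup_sum lookup_single)
  have "lookup (f * xmon u) (a + u) = lookup f a" if "a \<in> keys f" for a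
  proof -
    have "(\<Sum>a'\<in>keys f. lookup f a' when a' + u = a + u) = (\<Sum>a'\<in>{a}. lookup f a' when a' + u = a + u)"
      by (rule sum.mono_neutral_right) (use that in auto)
    then show ?thesis using L by simp
  qed
  moreover have "b \<in> (\<lambda>a. a + u) ` keys f" if "b \<in> keys (f * xmon u)" for b
  proof (rule ccontr)
    assume "b \<notin> (\<lambda>a. a + u) ` keys f"
    then have "lookup (f * xmon u) b = 0" using L by (auto simp: when_def intro!: sum.neutral)
    then show False using that by (simp add: in_keys_iff)
  qed
  ultimately show ?thesis by (auto simp: in_keys_iff)
qed

lemma prime_prod:
  assumes P: "prime_ideal P" and S: "finite S"
  shows "prod c S \<in> P \<Longrightarrow> \<exists>x\<in>S. c x \<in> P"
  using S
proof (induction S rule: finite_induct)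
  case empty
  then have "(1::'a) \<in> P" by simp
  then have "\<And>r. r \<in> P" using P unfolding prime_ideal_def is_ideal_def by (metis mult.right_neutral)
  then show ?case using P by (auto simp: prime_ideal_def)
next
  case (insert x F)
  then have "c x * prod c F \<in> P" by simp
  then have "c x \<in> P \<or> prod c F \<in> P" using P unfolding prime_ideal_def by blast
  then show ?case using insert.IH by blast
qed

lemma no_emb_SR:
  assumes C: "complex \<Delta>"
  shows "no_embedded_primes (SR_ideal \<Delta> :: ('v::finite,'a::idom) mpoly set)"
  unfolding no_embedded_primes_def
proof
  fix P assume "P \<in> ass_primes (SR_ideal \<Delta> :: ('v,'a) mpoly set)"
  then obtain f where P: "prime_ideal P" "P = colon (SR_ideal \<Delta>) f" by (auto simp: ass_primes_def)
  define I :: "('v,'a) mpoly set" where "I = SR_ideal \<Delta>"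
  have dc: "dclosed \<Delta>" using C by (simp add: complex_dclosed)
  have cI: "cplx I = \<Delta>" using cplx_SR[OF dc] by (simp add: I_def)
  have IG: "I = ideal_gen (xmon ` {sqmon F | F. F \<notin> \<Delta>})" by (simp add: I_def SR_alt)
  define Fs where "Fs = {F. facet F \<Delta>}"
  have memI: "g \<in> I \<longleftrightarrow> (\<forall>F\<in>Fs. g \<in> vprime (UNIV - F))" for g
  proof
    assume g: "g \<in> I"
    show "\<forall>F\<in>Fs. g \<in> vprime (UNIV - F)"
    proof
      fix F assume "F \<in> Fs"
      then have "UNIV - (UNIV - F) \<in> cplx I" using cI by (simp add: Fs_def facet_def)
      then have "I \<subseteq> vprime (UNIV - F)" using sub_vprime_iff[OF IG] by blast
      then show "g \<in> vprime (UNIV - F)" using g by blast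
    qed
  next
    assume g: "\<forall>F\<in>Fs. g \<in> vprime (UNIV - F)"
    have "\<forall>a\<in>keys g. keys a \<notin> \<Delta>"
    proof (intro ballI notI)
      fix a assume a: "a \<in> keys g" "keys a \<in> \<Delta>"
      then obtain M where M: "facet M \<Delta>" "keys a \<subseteq> M" using finite_facet by blast
      then have "g \<in> vprime (UNIV - M)" using g by (simp add: Fs_def)
      then have "keys a \<inter> (UNIV - M) \<noteq> {}" using a(1) by (simp add: vprime_mem)
      then show False using M(2) by blast
    qed
    then show "g \<in> I" using SR_mem[OF dc, where 'a='a] by (simp add: I_def)
  qed
  define Fs' where "Fs' = {F\<in>Fs. f \<notin> vprime (UNIV - F)}"
  have Pc: "g \<in> P \<longleftrightarrow> (\<forall>F\<in>Fs'. g \<in> vprime (UNIV - F))" for g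
  proof -
    have "g \<in> P \<longleftrightarrow> g * f \<in> I" using P(2) by (simp add: colon_def I_def)
    also have "\<dots> \<longleftrightarrow> (\<forall>F\<in>Fs. g * f \<in> vprime (UNIV - F))" by (rule memI)
    also have "\<dots> \<longleftrightarrow> (\<forall>F\<in>Fs'. g \<in> vprime (UNIV - F))"
    proof -
      have "g * f \<in> vprime (UNIV - F) \<longleftrightarrow> g \<in> vprime (UNIV - F) \<or> f \<in> vprime (UNIV - F)" for F
      proof -
        have pr: "prime_ideal (vprime (UNIV - F) :: ('v,'a) mpoly set)" by (rule vprime_prime)
        then have id: "is_ideal (vprime (UNIV - F) :: ('v,'a) mpoly set)" by (simp add: prime_ideal_def)
        show ?thesis
        proof
          assume "g * f \<in> vprime (UNIV - F)" then show "g \<in> vprime (UNIV - F) \<or> f \<in> vprime (UNIV - F)"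
            using pr unfolding prime_ideal_def by blast
        next
          assume "g \<in> vprime (UNIV - F) \<or> f \<in> vprime (UNIV - F)"
          then show "g * f \<in> vprime (UNIV - F)"
            using ideal_mult[OF id, of g f] ideal_mult[OF id, of f g] by (auto simp: mult.commute)
        qed
      qed
      then show ?thesis by (auto simp: Fs'_def)
    qed
    finally show ?thesis .
  qed
  have finFs': "finite Fs'" by simp
  have "\<exists>F\<in>Fs'. P = vprime (UNIV - F)"
  proof (rule ccontr)
    assume "\<not> (\<exists>F\<in>Fs'. P = vprime (UNIV - F))"
    then have "\<forall>F\<in>Fs'. \<exists>g. g \<in> vprime (UNIV - F) \<and> g \<notin> P"
      using Pc by blast
    then obtain c where c: "\<And>F. F \<in> Fs' \<Longrightarrow> c F \<in> vprime (UNIV - F) \<and> c F \<notin> P" by metis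
    have "prod c Fs' \<in> P"
      unfolding Pc
    proof
      fix F assume F: "F \<in> Fs'"
      have pr: "prime_ideal (vprime (UNIV - F) :: ('v,'a) mpoly set)" by (rule vprime_prime)
      then have id: "is_ideal (vprime (UNIV - F) :: ('v,'a) mpoly set)" by (simp add: prime_ideal_def)
      have "prod c Fs' = c F * prod c (Fs' - {F})" using F finFs' by (simp add: prod.remove)
      then show "prod c Fs' \<in> vprime (UNIV - F)"
        using ideal_mult[OF id, of "c F" "prod c (Fs' - {F})"] c[OF F] by (simp add: mult.commute)
    qed
    then obtain F where "F \<in> Fs'" "c F \<in> P" using prime_prod[OF P(1) finFs'] by blast
    then show False using c by blast
  qed
  then obtain F where F: "F \<in> Fs'" "P = vprime (UNIV - F)" by blast
  then have "facet F (cplx I)" using cI by (simp add: Fs'_def Fs_def)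
  then have "P \<in> min_primes I" using min_primes_char[OF IG, of P] F(2) by blast
  then show "P \<in> min_primes (SR_ideal \<Delta>)" by (simp add: I_def)
qed

lemma SR_colon:
  assumes dc: "dclosed \<Delta>"
  shows "colon (SR_ideal \<Delta> :: ('v::finite,'a::comm_ring_1) mpoly set) (xmon (sqmon \<sigma>)) = SR_ideal (st \<Delta> \<sigma>)"
proof (rule SR_ideal_eqI[OF _ dclosed_st[OF dc]])
  fix f :: "('v,'a) mpoly"
  have "f \<in> colon (SR_ideal \<Delta>) (xmon (sqmon \<sigma>)) \<longleftrightarrow> f * xmon (sqmon \<sigma>) \<in> SR_ideal \<Delta>"
    by (simp add: colon_def)
  also have "\<dots> \<longleftrightarrow> (\<forall>b\<in>keys (f * xmon (sqmon \<sigma>)). keys b \<notin> \<Delta>)" by (rule SR_mem[OF dc])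
  also have "\<dots> \<longleftrightarrow> (\<forall>a\<in>keys f. keys (a + sqmon \<sigma>) \<notin> \<Delta>)" by (simp add: keys_mult_xmon)
  also have "\<dots> \<longleftrightarrow> (\<forall>a\<in>keys f. keys a \<notin> st \<Delta> \<sigma>)" by (simp add: keys_add_nat st_def)
  finally show "f \<in> colon (SR_ideal \<Delta>) (xmon (sqmon \<sigma>)) \<longleftrightarrow> (\<forall>a\<in>keys f. keys a \<notin> st \<Delta> \<sigma>)" .
qed

lemma SR_insert:
  assumes dc: "dclosed \<Delta>"
  shows "ideal_gen (insert (xmon (sqmon \<sigma>)) (SR_ideal \<Delta>) :: ('v::finite,'a::comm_ring_1) mpoly set) = SR_ideal (del \<Delta> \<sigma>)"
proof (rule SR_ideal_eqI[OF _ dclosed_del[OF dc]])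
  fix f :: "('v,'a) mpoly"
  have e: "ideal_gen (insert (xmon (sqmon \<sigma>)) (SR_ideal \<Delta>) :: ('v,'a) mpoly set)
      = ideal_gen (xmon ` insert (sqmon \<sigma>) {sqmon F | F. F \<notin> \<Delta>})"
    unfolding SR_alt ideal_gen_insert by simp
  have "f \<in> ideal_gen (insert (xmon (sqmon \<sigma>)) (SR_ideal \<Delta>)) \<longleftrightarrow>
      (\<forall>a\<in>keys f. \<exists>g\<in>insert (sqmon \<sigma>) {sqmon F | F. F \<notin> \<Delta>}. mdvd g a)"
    unfolding e by (rule mon_ideal_mem)
  also have "\<dots> \<longleftrightarrow> (\<forall>a\<in>keys f. keys a \<notin> del \<Delta> \<sigma>)"
  proof -
    have "(\<exists>g\<in>insert (sqmon \<sigma>) {sqmon F | F. F \<notin> \<Delta>}. mdvd g a) \<longleftrightarrow> keys a \<notin> del \<Delta> \<sigma>" for a :: "'v \<Rightarrow>\<^sub>0 nat"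
    proof -
      have "(\<exists>g\<in>insert (sqmon \<sigma>) {sqmon F | F. F \<notin> \<Delta>}. mdvd g a) \<longleftrightarrow> \<sigma> \<subseteq> keys a \<or> (\<exists>F. F \<notin> \<Delta> \<and> F \<subseteq> keys a)"
        by (auto simp: mdvd_sqmon)
      also have "\<dots> \<longleftrightarrow> \<sigma> \<subseteq> keys a \<or> keys a \<notin> \<Delta>" using dc unfolding dclosed_def by blast
      finally show ?thesis by (auto simp: del_def)
    qed
    then show ?thesis by simp
  qed
  finally show "f \<in> ideal_gen (insert (xmon (sqmon \<sigma>)) (SR_ideal \<Delta>)) \<longleftrightarrow> (\<forall>a\<in>keys f. keys a \<notin> del \<Delta> \<sigma>)" .
qed

lemma SR_simplex: "SR_ideal (Pow W) = (vprime (UNIV - W) :: ('v::finite,'a::comm_ring_1) mpoly set)"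
proof (rule SR_ideal_eqI[symmetric])
  show "dclosed (Pow W)" by (auto simp: dclosed_def)
  fix f :: "('v,'a) mpoly"
  show "f \<in> vprime (UNIV - W) \<longleftrightarrow> (\<forall>a\<in>keys f. keys a \<notin> Pow W)" by (auto simp: vprime_mem)
qed

lemma xmon_zero_one: "(xmon 0 :: ('v,'a::comm_ring_1) mpoly) = 1"
  by (simp add: xmon_def one_poly_mapping.abs_eq Poly_Mapping.single.abs_eq when_def)

lemma kdec_kclean:
  fixes \<Delta> :: "'v::finite set set"
  assumes "kdec k \<Delta>"
  shows "complex \<Delta> \<Longrightarrow> k_clean k (SR_ideal \<Delta> :: ('v,'a::idom) mpoly set)"
  using assms
proof (induction rule: kdec.induct)
  case (simplex \<Delta> W)
  have pr: "prime_ideal (SR_ideal \<Delta> :: ('v,'a) mpoly set)" using simplex(1) SR_simplex vprime_prime by metis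
  show ?case
  proof (rule k_clean.prime)
    show "monomial_ideal (SR_ideal \<Delta> :: ('v,'a) mpoly set)" by (rule SR_monomial)
    show "prime_ideal (SR_ideal \<Delta> :: ('v,'a) mpoly set)" by (rule pr)
    then show "(SR_ideal \<Delta> :: ('v,'a) mpoly set) \<noteq> UNIV" by (simp add: prime_ideal_def)
  qed
next
  case (step \<sigma> \<Delta>)
  have dc: "dclosed \<Delta>" using step.prems by (simp add: complex_dclosed)
  let ?I = "SR_ideal \<Delta> :: ('v,'a) mpoly set"
  have notin: "(xmon (sqmon \<sigma>) :: ('v,'a) mpoly) \<notin> ?I"
    using SR_xmon[OF dc, of "sqmon \<sigma>", where 'a='a] step.hyps(1) by simp
  show ?case
  proof (rule k_clean.step[of _ "sqmon \<sigma>"])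
    show "monomial_ideal ?I" by (rule SR_monomial)
    have "(xmon 0 :: ('v,'a) mpoly) \<notin> ?I"
      using SR_xmon[OF dc, of 0, where 'a='a] step.prems by (simp add: complex_def)
    then show "?I \<noteq> UNIV" by auto
    show "no_embedded_primes ?I" by (rule no_emb_SR[OF step.prems])
    show "card (supp (sqmon \<sigma>)) \<le> k + 1" using step.hyps(3) by (simp add: supp_def)
    show "k_clean k (colon ?I (xmon (sqmon \<sigma>)))"
      using step.IH(1)[OF complex_st[OF step.prems step.hyps(1)]] SR_colon[OF dc, of \<sigma>, where 'a='a] by simp
    have ins: "ideal_gen (insert (xmon (sqmon \<sigma>)) ?I) = SR_ideal (del \<Delta> \<sigma>)" by (rule SR_insert[OF dc])
    show "k_clean k (ideal_gen (insert (xmon (sqmon \<sigma>)) ?I))"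
      using step.IH(2)[OF complex_del[OF step.prems step.hyps(2)]] ins by simp
    show "cleaner ?I (sqmon \<sigma>)"
      unfolding cleaner_def
    proof (intro conjI)
      show "sqmon \<sigma> \<noteq> 0" using step.hyps(2) keys_sqmon[of \<sigma>] by (metis keys_empty_iff)
      show "(xmon (sqmon \<sigma>) :: ('v,'a) mpoly) \<notin> ?I" by (rule notin)
      show "min_primes (ideal_gen (insert (xmon (sqmon \<sigma>)) ?I)) \<subseteq> min_primes ?I"
      proof
        fix P assume "P \<in> min_primes (ideal_gen (insert (xmon (sqmon \<sigma>)) ?I))"
        then have P: "P \<in> min_primes (SR_ideal (del \<Delta> \<sigma>) :: ('v,'a) mpoly set)" using ins by simp
        obtain F where F: "facet F (cplx (SR_ideal (del \<Delta> \<sigma>) :: ('v,'a) mpoly set))" "P = vprime (UNIV - F)"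
          using min_primes_char[OF SR_alt, THEN iffD1, OF P] by blast
        have "facet F (del \<Delta> \<sigma>)" using F(1) cplx_SR[OF dclosed_del[OF dc], where 'a='a] by simp
        then have "facet F \<Delta>" using step.hyps(4) by (simp add: shed_def)
        then have "facet F (cplx ?I)" using cplx_SR[OF dc, where 'a='a] by simp
        then show "P \<in> min_primes ?I" using min_primes_char[OF SR_alt] F(2) by blast
      qed
    qed
  qed
qed

definition DI :: "'v::finite set set \<Rightarrow> ('v,'a::comm_ring_1) mpoly set" where
  "DI \<Delta> = SR_ideal (alex_dual_complex \<Delta>)"

definition FG :: "'v::finite set set \<Rightarrow> ('v \<Rightarrow>\<^sub>0 nat) set" where
  "FG \<Delta> = {sqmon (UNIV - F) | F. facet F \<Delta>}"

lemma dclosed_alex: "dclosed \<Delta> \<Longrightarrow> dclosed (alex_dual_complex \<Delta>)"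
  unfolding dclosed_def alex_dual_complex_def
proof (intro ballI allI impI CollectI notI)
  fix F G assume H: "\<forall>F\<in>\<Delta>. \<forall>G. G \<subseteq> F \<longrightarrow> G \<in> \<Delta>" "F \<in> {F. UNIV - F \<notin> \<Delta>}" "G \<subseteq> F" "UNIV - G \<in> \<Delta>"
  have "UNIV - F \<subseteq> UNIV - G" using H(3) by blast
  then show False using H(1,2,4) by blast
qed

lemma DI_mem:
  assumes "dclosed \<Delta>"
  shows "(f :: ('v::finite,'a::comm_ring_1) mpoly) \<in> DI \<Delta> \<longleftrightarrow> (\<forall>a\<in>keys f. UNIV - keys a \<in> \<Delta>)"
  unfolding DI_def SR_mem[OF dclosed_alex[OF assms]] by (simp add: alex_dual_complex_def)

lemma DI_gen:
  assumes C: "complex \<Delta>"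
  shows "(DI \<Delta> :: ('v::finite,'a::comm_ring_1) mpoly set) = ideal_gen (xmon ` FG \<Delta>)"
proof (intro set_eqI)
  fix f :: "('v,'a) mpoly"
  have dc: "dclosed \<Delta>" using C by (simp add: complex_dclosed)
  have "(\<exists>g\<in>FG \<Delta>. mdvd g a) \<longleftrightarrow> UNIV - keys a \<in> \<Delta>" for a :: "'v \<Rightarrow>\<^sub>0 nat"
  proof
    assume "\<exists>g\<in>FG \<Delta>. mdvd g a"
    then obtain F where F: "facet F \<Delta>" "UNIV - F \<subseteq> keys a" by (auto simp: FG_def mdvd_sqmon)
    then have "UNIV - keys a \<subseteq> F" by blast
    then show "UNIV - keys a \<in> \<Delta>" using F(1) dc unfolding facet_def dclosed_def by blast
  next
    assume "UNIV - keys a \<in> \<Delta>"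
    then obtain M where M: "facet M \<Delta>" "UNIV - keys a \<subseteq> M" using finite_facet by blast
    then have "mdvd (sqmon (UNIV - M)) a" by (auto simp: mdvd_sqmon)
    then show "\<exists>g\<in>FG \<Delta>. mdvd g a" using M(1) by (auto simp: FG_def)
  qed
  then show "f \<in> DI \<Delta> \<longleftrightarrow> f \<in> ideal_gen (xmon ` FG \<Delta>)"
    unfolding DI_mem[OF dc] mon_ideal_mem by simp
qed

lemma mingens_antichain:
  assumes "\<forall>x\<in>M. \<forall>y\<in>M. mdvd x y \<longrightarrow> x = y"
  shows "mingens (ideal_gen (xmon ` M) :: ('v,'a::comm_ring_1) mpoly set) = M"
proof (intro set_eqI iffI)
  fix a assume "a \<in> mingens (ideal_gen (xmon ` M) :: ('v,'a) mpoly set)"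
  then have a: "(xmon a :: ('v,'a) mpoly) \<in> ideal_gen (xmon ` M)"
    "\<forall>b. (xmon b :: ('v,'a) mpoly) \<in> ideal_gen (xmon ` M) \<and> mdvd b a \<longrightarrow> b = a"
    by (auto simp: mingens_def)
  obtain g where g: "g \<in> M" "mdvd g a" using a(1) by (auto simp: mon_ideal_xmon)
  have "(xmon g :: ('v,'a) mpoly) \<in> ideal_gen (xmon ` M)" unfolding mon_ideal_xmon using g(1) mdvd_refl by blast
  then have "g = a" using a(2) g(2) by blast
  then show "a \<in> M" using g(1) by simp
next
  fix a assume a: "a \<in> M"
  have "(xmon a :: ('v,'a) mpoly) \<in> ideal_gen (xmon ` M)" unfolding mon_ideal_xmon using a mdvd_refl by blast
  moreover have "\<forall>b. (xmon b :: ('v,'a) mpoly) \<in> ideal_gen (xmon ` M) \<and> mdvd b a \<longrightarrow> b = a"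
  proof (intro allI impI)
    fix b assume b: "(xmon b :: ('v,'a) mpoly) \<in> ideal_gen (xmon ` M) \<and> mdvd b a"
    then obtain g where g: "g \<in> M" "mdvd g b" by (auto simp: mon_ideal_xmon)
    then have "g = a" using assms a mdvd_trans[OF g(2)] b by blast
    then show "b = a" using g(2) b mdvd_antisym by blast
  qed
  ultimately show "a \<in> mingens (ideal_gen (xmon ` M) :: ('v,'a) mpoly set)" by (simp add: mingens_def)
qed

lemma FG_antichain:
  assumes MF: "M \<subseteq> FG \<Delta>"
  shows "\<forall>x\<in>M. \<forall>y\<in>M. mdvd x y \<longrightarrow> x = y"
proof (intro ballI impI)
  fix x y assume xy: "x \<in> M" "y \<in> M" "mdvd x y"
  obtain F where F: "facet F \<Delta>" "x = sqmon (UNIV - F)" using xy(1) MF by (auto simp: FG_def)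
  obtain G where G: "facet G \<Delta>" "y = sqmon (UNIV - G)" using xy(2) MF by (auto simp: FG_def)
  have "UNIV - F \<subseteq> UNIV - G" using xy(3) F(2) G(2) by (simp add: mdvd_sqmon)
  then have "G \<subseteq> F" by blast
  then have "G = F" using F(1) G(1) unfolding facet_def by blast
  then show "x = y" using F G by simp
qed

lemma mingens_DI:
  assumes "complex \<Delta>"
  shows "mingens (DI \<Delta> :: ('v::finite,'a::comm_ring_1) mpoly set) = FG \<Delta>"
  using DI_gen[OF assms, where 'a='a] mingens_antichain[OF FG_antichain[of "FG \<Delta>" \<Delta>], where 'a='a] by simp

lemma mdvd_single: "mdvd (Poly_Mapping.single i c) w \<longleftrightarrow> c \<le> lookup w i"
  by (auto simp: mdvd_def lookup_single when_def)

lemma bracket_FG: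
  "bracket_one v (sqmon (UNIV - F)) \<longleftrightarrow> {i. lookup v i = 1} \<subseteq> (F :: 'v::finite set)"
proof -
  have "bracket_one v (sqmon (UNIV - F)) \<longleftrightarrow> (\<forall>i\<in>keys v. \<not> lookup v i \<le> (if i \<in> F then 0 else 1))"
    by (auto simp: bracket_one_def supp_def mdvd_single lookup_sqmon)
  also have "\<dots> \<longleftrightarrow> (\<forall>i\<in>keys v. lookup v i = 1 \<longrightarrow> i \<in> F)"
    by (auto simp: in_keys_iff le_Suc_eq)
  also have "\<dots> \<longleftrightarrow> {i. lookup v i = 1} \<subseteq> F" by (auto simp: in_keys_iff)
  finally show ?thesis .
qed

lemma lookup_sqmon_one: "{i. lookup (sqmon \<sigma>) i = 1} = (\<sigma> :: 'v::finite set)"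
  by (auto simp: lookup_sqmon split: if_splits)

lemma lower_DI:
  assumes "complex \<Delta>"
  shows "lower_part (DI \<Delta> :: ('v::finite,'a::comm_ring_1) mpoly set) v
     = ideal_gen (xmon ` {sqmon (UNIV - F) | F. facet F \<Delta> \<and> {i. lookup v i = 1} \<subseteq> F})"
proof -
  have "{w\<in>mingens (DI \<Delta> :: ('v,'a) mpoly set). bracket_one v w} = {sqmon (UNIV - F) | F. facet F \<Delta> \<and> {i. lookup v i = 1} \<subseteq> F}"
    unfolding mingens_DI[OF assms] FG_def by (auto simp: bracket_FG)
  then show ?thesis by (simp add: lower_part_def)
qed

lemma upper_DI:
  assumes "complex \<Delta>"
  shows "upper_part (DI \<Delta> :: ('v::finite,'a::comm_ring_1) mpoly set) v
     = ideal_gen (xmon ` {sqmon (UNIV - F) | F. facet F \<Delta> \<and> \<not> {i. lookup v i = 1} \<subseteq> F})"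
proof -
  have "{w\<in>mingens (DI \<Delta> :: ('v,'a) mpoly set). \<not> bracket_one v w} = {sqmon (UNIV - F) | F. facet F \<Delta> \<and> \<not> {i. lookup v i = 1} \<subseteq> F}"
    unfolding mingens_DI[OF assms] FG_def by (auto simp: bracket_FG)
  then show ?thesis by (simp add: upper_part_def)
qed

lemma DI_st:
  assumes C: "complex \<Delta>" and s: "\<sigma> \<in> \<Delta>"
  shows "ideal_gen (xmon ` {sqmon (UNIV - F) | F. facet F \<Delta> \<and> \<sigma> \<subseteq> F})
     = (DI (st \<Delta> \<sigma>) :: ('v::finite,'a::comm_ring_1) mpoly set)"
proof -
  have "FG (st \<Delta> \<sigma>) = {sqmon (UNIV - F) | F. facet F \<Delta> \<and> \<sigma> \<subseteq> F}"
    unfolding FG_def facet_st[OF s] by simp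
  then show ?thesis using DI_gen[OF complex_st[OF C s], where 'a='a] by simp
qed

lemma DI_del:
  assumes C: "complex \<Delta>" and s: "\<sigma> \<noteq> {}" and sh: "shed \<Delta> \<sigma>"
  shows "ideal_gen (xmon ` {sqmon (UNIV - F) | F. facet F \<Delta> \<and> \<not> \<sigma> \<subseteq> F})
     = (DI (del \<Delta> \<sigma>) :: ('v::finite,'a::comm_ring_1) mpoly set)"
proof -
  have "FG (del \<Delta> \<sigma>) = {sqmon (UNIV - F) | F. facet F \<Delta> \<and> \<not> \<sigma> \<subseteq> F}"
    unfolding FG_def facet_del_shed[OF sh] by simp
  then show ?thesis using DI_gen[OF complex_del[OF C s], where 'a='a] by simp
qed

lemma xmon_in_gen: "m \<in> M \<Longrightarrow> (xmon m :: ('v,'a::comm_ring_1) mpoly) \<in> ideal_gen (xmon ` M)"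
  unfolding mon_ideal_xmon using mdvd_refl by blast

lemma ideal_gen_empty: "ideal_gen {} = {0}"
proof
  have "is_ideal {0::'a::comm_ring_1}" by (simp add: is_ideal_def)
  then show "ideal_gen {} \<subseteq> ({0}::'a set)" by (rule ideal_gen_least) simp
  show "{0} \<subseteq> (ideal_gen {} :: 'a set)" using ideal_gen_ideal[of "{}::'a set"] by (simp add: is_ideal_def)
qed

lemma facet_step:
  fixes \<Delta> :: "'v::finite set set"
  assumes C: "complex \<Delta>" and sh: "shed \<Delta> \<sigma>" and F: "facet F \<Delta>" "\<sigma> \<subseteq> F" and l: "l \<in> \<sigma>"
  shows "\<exists>G. facet G \<Delta> \<and> \<not> \<sigma> \<subseteq> G \<and> F - G = {l}"
proof -
  have dc: "dclosed \<Delta>" using C by (simp add: complex_dclosed)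
  have "F - {l} \<in> del \<Delta> \<sigma>" using F l dc unfolding del_def dclosed_def facet_def by auto
  then obtain G where G: "facet G (del \<Delta> \<sigma>)" "F - {l} \<subseteq> G" using finite_facet by blast
  have fG: "facet G \<Delta>" using G(1) sh by (simp add: shed_def)
  have ns: "\<not> \<sigma> \<subseteq> G" using G(1) by (simp add: facet_def del_def)
  have "l \<notin> G"
  proof
    assume "l \<in> G"
    then have "F \<subseteq> G" using G(2) by blast
    then have "G = F" using F(1) fG unfolding facet_def by blast
    then show False using ns F(2) by simp
  qed
  then have "F - G = {l}" using G(2) F(2) l by blast
  then show ?thesis using fG ns by blast
qed

lemma lookup_sqmon_one': "{i. lookup (sqmon \<sigma>) i = Suc 0} = (\<sigma> :: 'v::finite set)"
  using lookup_sqmon_one by simp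

lemma kdec_kdecomp:
  fixes \<Delta> :: "'v::finite set set"
  assumes "kdec k \<Delta>"
  shows "complex \<Delta> \<Longrightarrow> k_decomposable k (DI \<Delta> :: ('v,'a::comm_ring_1) mpoly set)"
  using assms
proof (induction rule: kdec.induct)
  case (simplex \<Delta> W)
  have "FG \<Delta> = {sqmon (UNIV - W)}"
  proof -
    have "facet F \<Delta> \<longleftrightarrow> F = W" for F using simplex(1) by (auto simp: facet_def)
    then show ?thesis by (auto simp: FG_def)
  qed
  then have "card (mingens (DI \<Delta> :: ('v,'a) mpoly set)) = 1" using mingens_DI[OF simplex(2), where 'a='a] by simp
  then show ?case using k_decomposable.single[of "DI \<Delta>"] by (simp add: DI_def SR_monomial)
next
  case (step \<sigma> \<Delta>)
  have C: "complex \<Delta>" by (rule step.prems)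
  have dc: "dclosed \<Delta>" using C by (simp add: complex_dclosed)
  let ?v = "sqmon \<sigma>"
  have low: "lower_part (DI \<Delta> :: ('v,'a) mpoly set) ?v = DI (st \<Delta> \<sigma>)"
    using lower_DI[OF C, of ?v, where 'a='a] DI_st[OF C step.hyps(1), where 'a='a] by (simp add: lookup_sqmon_one lookup_sqmon_one')
  have up: "upper_part (DI \<Delta> :: ('v,'a) mpoly set) ?v = DI (del \<Delta> \<sigma>)"
    using upper_DI[OF C, of ?v, where 'a='a] DI_del[OF C step.hyps(2) step.hyps(4), where 'a='a] by (simp add: lookup_sqmon_one lookup_sqmon_one')
  have mlow: "mingens (lower_part (DI \<Delta> :: ('v,'a) mpoly set) ?v) = {sqmon (UNIV - F) | F. facet F \<Delta> \<and> \<sigma> \<subseteq> F}"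
  proof -
    have sub: "{sqmon (UNIV - F) | F. facet F \<Delta> \<and> \<sigma> \<subseteq> F} \<subseteq> FG \<Delta>" by (auto simp: FG_def)
    have "lower_part (DI \<Delta> :: ('v,'a) mpoly set) ?v = ideal_gen (xmon ` {sqmon (UNIV - F) | F. facet F \<Delta> \<and> \<sigma> \<subseteq> F})"
      using lower_DI[OF C, of ?v, where 'a='a] unfolding lookup_sqmon_one .
    then show ?thesis using mingens_antichain[OF FG_antichain[OF sub], where 'a='a] by simp
  qed
  have mup: "mingens (upper_part (DI \<Delta> :: ('v,'a) mpoly set) ?v) = {sqmon (UNIV - F) | F. facet F \<Delta> \<and> \<not> \<sigma> \<subseteq> F}"
  proof -
    have sub: "{sqmon (UNIV - F) | F. facet F \<Delta> \<and> \<not> \<sigma> \<subseteq> F} \<subseteq> FG \<Delta>" by (auto simp: FG_def)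
    have "upper_part (DI \<Delta> :: ('v,'a) mpoly set) ?v = ideal_gen (xmon ` {sqmon (UNIV - F) | F. facet F \<Delta> \<and> \<not> \<sigma> \<subseteq> F})"
      using upper_DI[OF C, of ?v, where 'a='a] unfolding lookup_sqmon_one .
    then show ?thesis using mingens_antichain[OF FG_antichain[OF sub], where 'a='a] by simp
  qed
  show ?case
  proof (rule k_decomposable.step[of _ ?v])
    show "monomial_ideal (DI \<Delta> :: ('v,'a) mpoly set)" by (simp add: DI_def SR_monomial)
    show "card (supp ?v) \<le> k + 1" using step.hyps(3) by (simp add: supp_def)
    show "k_decomposable k (upper_part (DI \<Delta> :: ('v,'a) mpoly set) ?v)"
      using step.IH(2)[OF complex_del[OF C step.hyps(2)]] up by simp
    show "k_decomposable k (lower_part (DI \<Delta> :: ('v,'a) mpoly set) ?v)"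
      using step.IH(1)[OF complex_st[OF C step.hyps(1)]] low by simp
    show "shedding (DI \<Delta> :: ('v,'a) mpoly set) ?v"
      unfolding shedding_def
    proof (intro conjI ballI)
      obtain F0 where F0: "facet F0 \<Delta>" "\<sigma> \<subseteq> F0" using finite_facet[OF step.hyps(1)] by blast
      have "sqmon (UNIV - F0) \<in> {sqmon (UNIV - F) | F. facet F \<Delta> \<and> {i. lookup ?v i = 1} \<subseteq> F}"
        using F0 by (auto simp: lookup_sqmon_one lookup_sqmon_one')
      then have "(xmon (sqmon (UNIV - F0)) :: ('v,'a) mpoly) \<in> ideal_gen (xmon ` {sqmon (UNIV - F) | F. facet F \<Delta> \<and> {i. lookup ?v i = 1} \<subseteq> F})"
        by (rule xmon_in_gen)
      then have X: "(xmon (sqmon (UNIV - F0)) :: ('v,'a) mpoly) \<in> lower_part (DI \<Delta>) ?v"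
        using lower_DI[OF C, of ?v, where 'a='a] by simp
      show "lower_part (DI \<Delta> :: ('v,'a) mpoly set) ?v \<noteq> {0}"
      proof
        assume "lower_part (DI \<Delta> :: ('v,'a) mpoly set) ?v = {0}"
        then have "(xmon (sqmon (UNIV - F0)) :: ('v,'a) mpoly) = 0" using X by simp
        then show False by simp
      qed
    next
      fix ui l assume ui: "ui \<in> mingens (lower_part (DI \<Delta> :: ('v,'a) mpoly set) ?v)" and l: "l \<in> supp ?v"
      obtain F where F: "facet F \<Delta>" "\<sigma> \<subseteq> F" "ui = sqmon (UNIV - F)" using ui mlow by auto
      have l': "l \<in> \<sigma>" using l by (simp add: supp_def)
      obtain G where G: "facet G \<Delta>" "\<not> \<sigma> \<subseteq> G" "F - G = {l}"
        using facet_step[OF C step.hyps(4) F(1,2) l'] by blast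
      have "sqmon (UNIV - G) \<in> mingens (upper_part (DI \<Delta> :: ('v,'a) mpoly set) ?v)" using G mup by auto
      moreover have "mon_colon (sqmon (UNIV - G)) ui = var l"
      proof -
        have "(UNIV - G) - (UNIV - F) = F - G" by blast
        then show ?thesis using F(3) G(3) by (simp add: mon_colon_def sqmon_diff sqmon_single)
      qed
      ultimately show "\<exists>uj\<in>mingens (upper_part (DI \<Delta> :: ('v,'a) mpoly set) ?v). mon_colon uj ui = var l" by blast
    qed
  qed
qed

lemma sqmon_diff_facets:
  "sqmon (UNIV - G) - sqmon (UNIV - F) = var l \<Longrightarrow> F - G = {l :: 'v::finite}"
proof -
  assume a: "sqmon (UNIV - G) - sqmon (UNIV - F) = var l"
  have "(UNIV - G) - (UNIV - F) = F - G" by blast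
  then have "sqmon (F - G) = sqmon {l}" using a by (simp add: sqmon_diff sqmon_single)
  then show ?thesis by (rule sqmon_inj)
qed

lemma kdecomp_kdec:
  fixes J :: "('v::finite,'a::comm_ring_1) mpoly set"
  assumes "k_decomposable k J"
  shows "complex \<Delta> \<Longrightarrow> J = DI \<Delta> \<Longrightarrow> kdec k \<Delta>"
  using assms
proof (induction arbitrary: \<Delta> rule: k_decomposable.induct)
  case (single I)
  have C: "complex \<Delta>" by (rule single.prems(1))
  have dc: "dclosed \<Delta>" using C by (simp add: complex_dclosed)
  have "card (FG \<Delta>) = 1" using single(2) single.prems(2) mingens_DI[OF C, where 'a='a] by simp
  then obtain x where x: "FG \<Delta> = {x}" by (rule card_1_singletonE)
  obtain W where W: "facet W \<Delta>" using finite_facet[of "{}" \<Delta>] C by (auto simp: complex_def)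
  have allW: "facet F \<Delta> \<Longrightarrow> F = W" for F
  proof -
    assume F: "facet F \<Delta>"
    have "sqmon (UNIV - F) \<in> FG \<Delta>" "sqmon (UNIV - W) \<in> FG \<Delta>" using F W by (auto simp: FG_def)
    then have "sqmon (UNIV - F) = sqmon (UNIV - W)" using x by simp
    then have "UNIV - F = UNIV - W" by (rule sqmon_inj)
    then show "F = W" by blast
  qed
  have "\<Delta> = Pow W"
  proof (intro set_eqI iffI)
    fix F assume "F \<in> \<Delta>"
    then obtain M where "facet M \<Delta>" "F \<subseteq> M" using finite_facet by blast
    then show "F \<in> Pow W" using allW by blast
  next
    fix F assume "F \<in> Pow W"
    then show "F \<in> \<Delta>" using W dc unfolding facet_def dclosed_def by blast
  qed
  then show ?case by (rule kdec.simplex)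
next
  case (step I v)
  have C: "complex \<Delta>" by (rule step.prems(1))
  have dc: "dclosed \<Delta>" using C by (simp add: complex_dclosed)
  have IJ: "I = DI \<Delta>" by (rule step.prems(2))
  define \<sigma> where "\<sigma> = {i. lookup v i = 1}"
  define Mlow where "Mlow = {sqmon (UNIV - F) | F. facet F \<Delta> \<and> \<sigma> \<subseteq> F}"
  define Mup where "Mup = {sqmon (UNIV - F) | F. facet F \<Delta> \<and> \<not> \<sigma> \<subseteq> F}"
  have lowJ: "lower_part I v = ideal_gen (xmon ` Mlow)"
    using lower_DI[OF C, of v, where 'a='a] IJ by (simp add: Mlow_def \<sigma>_def)
  have upJ: "upper_part I v = ideal_gen (xmon ` Mup)"
    using upper_DI[OF C, of v, where 'a='a] IJ by (simp add: Mup_def \<sigma>_def)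
  have subl: "Mlow \<subseteq> FG \<Delta>" by (auto simp: Mlow_def FG_def)
  have subu: "Mup \<subseteq> FG \<Delta>" by (auto simp: Mup_def FG_def)
  have mlow: "mingens (lower_part I v) = Mlow"
    using lowJ mingens_antichain[OF FG_antichain[OF subl], where 'a='a] by simp
  have mup: "mingens (upper_part I v) = Mup"
    using upJ mingens_antichain[OF FG_antichain[OF subu], where 'a='a] by simp
  have S1: "lower_part I v \<noteq> {0}" using step(2) by (simp add: shedding_def)
  have S2: "\<forall>ui\<in>Mlow. \<forall>l\<in>keys v. \<exists>uj\<in>Mup. mon_colon uj ui = var l"
    using step(2) mlow mup by (simp add: shedding_def supp_def)
  have cond: "\<exists>G. facet G \<Delta> \<and> \<not> \<sigma> \<subseteq> G \<and> F - G = {l}" if F: "facet F \<Delta>" "\<sigma> \<subseteq> F" and l: "l \<in> keys v" for F l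
  proof -
    have "sqmon (UNIV - F) \<in> Mlow" using F by (auto simp: Mlow_def)
    then obtain uj where "uj \<in> Mup" "mon_colon uj (sqmon (UNIV - F)) = var l" using S2 l by blast
    then obtain G where G: "facet G \<Delta>" "\<not> \<sigma> \<subseteq> G" "sqmon (UNIV - G) - sqmon (UNIV - F) = var l"
      by (auto simp: Mup_def mon_colon_def)
    then show ?thesis using sqmon_diff_facets[OF G(3)] by blast
  qed
  have "Mlow \<noteq> {}"
  proof
    assume "Mlow = {}"
    then have "lower_part I v = {0}" using lowJ ideal_gen_empty by simp
    then show False using S1 by simp
  qed
  then obtain F0 where F0: "facet F0 \<Delta>" "\<sigma> \<subseteq> F0" by (auto simp: Mlow_def)
  show ?case
  proof (cases "keys v = {}")
    case True
    then have "\<sigma> = {}" by (auto simp: \<sigma>_def in_keys_iff)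
    then have "Mlow = FG \<Delta>" by (simp add: Mlow_def FG_def)
    then have "lower_part I v = DI \<Delta>" using lowJ DI_gen[OF C, where 'a='a] by simp
    then show ?thesis using step.IH(2)[OF C] by simp
  next
    case False
    have kv: "keys v = \<sigma>"
    proof
      show "keys v \<subseteq> \<sigma>"
      proof
        fix l assume l: "l \<in> keys v"
        obtain G where G: "facet G \<Delta>" "\<not> \<sigma> \<subseteq> G" "F0 - G = {l}" using cond[OF F0 l] by blast
        then obtain j where j: "j \<in> \<sigma>" "j \<notin> G" by blast
        then have "j \<in> F0 - G" using F0(2) by blast
        then have "j = l" using G(3) by simp
        then show "l \<in> \<sigma>" using j by simp
      qed
      show "\<sigma> \<subseteq> keys v" by (auto simp: \<sigma>_def in_keys_iff)
    qed
    have sne: "\<sigma> \<noteq> {}" using False kv by simp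
    have sD: "\<sigma> \<in> \<Delta>" using F0 dc unfolding facet_def dclosed_def by blast
    have sh: "shed \<Delta> \<sigma>"
      unfolding shed_def
    proof (intro allI impI)
      fix G assume G: "facet G (del \<Delta> \<sigma>)"
      have GD: "G \<in> \<Delta>" "\<not> \<sigma> \<subseteq> G" using G by (auto simp: facet_def del_def)
      show "facet G \<Delta>"
        unfolding facet_def
      proof (intro conjI ballI impI)
        show "G \<in> \<Delta>" by (rule GD(1))
        fix H assume H: "H \<in> \<Delta>" "G \<subseteq> H"
        show "H = G"
        proof (rule ccontr)
          assume "H \<noteq> G"
          then obtain j where j: "j \<in> H" "j \<notin> G" using H(2) by blast
          have H'D: "insert j G \<in> \<Delta>" using H j dc unfolding dclosed_def by blast
          have "\<sigma> \<subseteq> insert j G"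
          proof (rule ccontr)
            assume "\<not> \<sigma> \<subseteq> insert j G"
            then have "insert j G \<in> del \<Delta> \<sigma>" using H'D by (simp add: del_def)
            then have "insert j G = G" using G unfolding facet_def by blast
            then show False using j by blast
          qed
          then have js: "j \<in> \<sigma>" using GD(2) by blast
          obtain F where F: "facet F \<Delta>" "insert j G \<subseteq> F" using finite_facet[OF H'D] by blast
          have sF: "\<sigma> \<subseteq> F" using F(2) \<open>\<sigma> \<subseteq> insert j G\<close> by blast
          obtain G' where G': "facet G' \<Delta>" "\<not> \<sigma> \<subseteq> G'" "F - G' = {j}"
            using cond[OF F(1) sF] js kv by blast
          have "G \<subseteq> G'"
          proof
            fix x assume x: "x \<in> G"
            then have "x \<in> F" "x \<noteq> j" using F(2) j(2) by auto
            then show "x \<in> G'" using G'(3) by (metis DiffI singletonD)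
          qed
          moreover have "G' \<in> del \<Delta> \<sigma>" using G' by (simp add: facet_def del_def)
          ultimately have "G' = G" using G unfolding facet_def by blast
          then have "G' \<subseteq> F" using F(2) by blast
          then have "F = G'" using G'(1) F(1) unfolding facet_def by blast
          then show False using G'(3) by blast
        qed
      qed
    qed
    have lowst: "lower_part I v = DI (st \<Delta> \<sigma>)" using lowJ DI_st[OF C sD, where 'a='a] by (simp add: Mlow_def)
    have updel: "upper_part I v = DI (del \<Delta> \<sigma>)" using upJ DI_del[OF C sne sh, where 'a='a] by (simp add: Mup_def)
    show ?thesis
    proof (rule kdec.step[OF sD sne])
      show "card \<sigma> \<le> k + 1" using step(3) kv by (simp add: supp_def)
      show "shed \<Delta> \<sigma>" by (rule sh)
      show "kdec k (st \<Delta> \<sigma>)" using step.IH(2)[OF complex_st[OF C sD] lowst] .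
      show "kdec k (del \<Delta> \<sigma>)" using step.IH(1)[OF complex_del[OF C sne] updel] .
    qed
  qed
qed

theorem corollary4p4:
  fixes I :: "('v::finite, 'a::field) mpoly set" and k :: nat
  assumes "\<exists>G. I = ideal_gen (xmon ` G) \<and> (\<forall>g\<in>G. squarefree_mon g \<and> mdeg g \<ge> 2)"
  shows "k_clean k I \<longleftrightarrow> k_decomposable k (alexander_dual I)"
proof -
  obtain G where IG: "I = ideal_gen (xmon ` G)" and Gp: "\<forall>g\<in>G. squarefree_mon g \<and> mdeg g \<ge> 2"
    using assms by blast
  define \<Delta> where "\<Delta> = SR_complex I"
  have sqd: "mdvd g a \<longleftrightarrow> keys g \<subseteq> keys a" if g: "g \<in> G" for g a
  proof
    assume "mdvd g a" then show "keys g \<subseteq> keys a" by (rule mdvd_keys)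
  next
    assume ka: "keys g \<subseteq> keys a"
    have "lookup g i \<le> 1" for i using Gp g by (simp add: squarefree_mon_def)
    show "mdvd g a" unfolding mdvd_def
    proof
      fix i
      show "lookup g i \<le> lookup a i"
      proof (cases "lookup g i = 0")
        case False
        then have "i \<in> keys g" by (simp add: in_keys_iff)
        then have "i \<in> keys a" using ka by blast
        then have "1 \<le> lookup a i" by (simp add: in_keys_iff)
        then show ?thesis using \<open>lookup g i \<le> 1\<close> order_trans by blast
      qed simp
    qed
  qed
  have gne: "keys g \<noteq> {}" if g: "g \<in> G" for g
  proof
    assume "keys g = {}"
    then have "mdeg g = 0" by (simp add: mdeg_def)
    then show False using Gp g by fastforce
  qed
  have xI: "(xmon a :: ('v,'a) mpoly) \<in> I \<longleftrightarrow> (\<exists>g\<in>G. keys g \<subseteq> keys a)" for a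
    unfolding IG mon_ideal_xmon using sqd by blast
  have De: "F \<in> \<Delta> \<longleftrightarrow> \<not> (\<exists>g\<in>G. keys g \<subseteq> F)" for F
    using xI[of "sqmon F"] by (simp add: \<Delta>_def SR_complex_def)
  have C: "complex \<Delta>"
    unfolding complex_def
  proof (intro conjI ballI allI impI)
    show "{} \<in> \<Delta>" using De gne by blast
    fix F H assume "F \<in> \<Delta>" "H \<subseteq> F"
    then show "H \<in> \<Delta>" using De by blast
  qed
  have dc: "dclosed \<Delta>" using C by (simp add: complex_dclosed)
  have ISR: "I = SR_ideal \<Delta>"
  proof (rule SR_ideal_eqI[OF _ dc])
    fix f :: "('v,'a) mpoly"
    have "f \<in> I \<longleftrightarrow> (\<forall>a\<in>keys f. (xmon a :: ('v,'a) mpoly) \<in> I)" unfolding IG by (rule mon_ideal_mem')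
    then show "f \<in> I \<longleftrightarrow> (\<forall>a\<in>keys f. keys a \<notin> \<Delta>)" using xI De by simp
  qed
  have cI: "cplx I = \<Delta>" using ISR cplx_SR[OF dc, where 'a='a] by simp
  have AD: "alexander_dual I = (DI \<Delta> :: ('v,'a) mpoly set)"
    by (simp add: alexander_dual_def DI_def \<Delta>_def)
  show ?thesis
  proof
    assume "k_clean k I"
    then have "kdec k (cplx I)" by (rule kclean_kdec)
    then have "kdec k \<Delta>" using cI by simp
    then have "k_decomposable k (DI \<Delta> :: ('v,'a) mpoly set)" by (rule kdec_kdecomp[OF _ C])
    then show "k_decomposable k (alexander_dual I)" using AD by simp
  next
    assume "k_decomposable k (alexander_dual I)"
    then have "k_decomposable k (DI \<Delta> :: ('v,'a) mpoly set)" using AD by simp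
    then have "kdec k \<Delta>" by (rule kdecomp_kdec[OF _ C refl])
    then have "k_clean k (SR_ideal \<Delta> :: ('v,'a) mpoly set)" by (rule kdec_kclean[OF _ C])
    then show "k_clean k I" using ISR by simp
  qed
qed

end
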